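(* For each $p$, let $S_1,\dots,S_p$ be jointly Gaussian random variables of the form $S_i=\eta_i+m_i$, where $m_1,\dots,m_p$ are real constants (possibly depending on $p$) and $(\eta_1,\dots,\eta_p)$ is a centered Gaussian vector with $\operatorname{Var}(\eta_i)=1$ and correlations $r_{ij}=\operatorname{Corr}(\eta_i,\eta_j)$ satisfying $|r_{ij}|<\rho_{|i-j|}$ for $i\neq j$, where $(\rho_m)_{m\ge1}$ is a sequence with $\rho_m<1$ for all $m$ and $\rho_p\log p\to0$ as $p\to\infty$. Assume $$\max_{1\le i\le p}|m_i|=o\big((\log p)^{1/2}\big)\quad\text{as }p\to\infty.$$ Let $|S|_{(1)}\le |S|_{(2)}\le\cdots\le |S|_{(p)}$ denote the order statistics of $|S_1|,\dots,|S_p|$, and for fixed integers $k,\ell$ with $2\le \ell<k$ set $T_k=|S|_{(p-k)}$ and $T_\ell=|S|_{(p-\ell)}$. Then $$\lim_{p\to\infty}P\{kT_k^2>\ell T_\ell^2\}=1.$$ *)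

theory Defs
  imports "HOL-Probability.Probability" "HOL-Library.Landau_Symbols"
begin

definition centered_gaussian_vector ::
  "'a measure \<Rightarrow> nat set \<Rightarrow> (nat \<Rightarrow> 'a \<Rightarrow> real) \<Rightarrow> bool" where
  "centered_gaussian_vector M I X \<longleftrightarrow>
     prob_space M \<and> finite I \<and> (\<forall>i\<in>I. X i \<in> borel_measurable M) \<and>
     (\<forall>c :: nat \<Rightarrow> real.
        (AE \<omega> in M. (\<Sum>i\<in>I. c i * X i \<omega>) = 0) \<or>
        (\<exists>\<sigma>>0. distributed M lborel (\<lambda>\<omega>. \<Sum>i\<in>I. c i * X i \<omega>) (normal_density 0 \<sigma>)))"

definition expect :: "'a measure \<Rightarrow> ('a \<Rightarrow> real) \<Rightarrow> real" where
  "expect M X = integral\<^sup>L M X"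

definition var :: "'a measure \<Rightarrow> ('a \<Rightarrow> real) \<Rightarrow> real" where
  "var M X = integral\<^sup>L M (\<lambda>\<omega>. (X \<omega> - expect M X)\<^sup>2)"

definition cov :: "'a measure \<Rightarrow> ('a \<Rightarrow> real) \<Rightarrow> ('a \<Rightarrow> real) \<Rightarrow> real" where
  "cov M X Y = integral\<^sup>L M (\<lambda>\<omega>. (X \<omega> - expect M X) * (Y \<omega> - expect M Y))"

definition corr :: "'a measure \<Rightarrow> ('a \<Rightarrow> real) \<Rightarrow> ('a \<Rightarrow> real) \<Rightarrow> real" where
  "corr M X Y = cov M X Y / (sqrt (var M X) * sqrt (var M Y))"

text \<open>j-th order statistic (1-indexed, ascending) of x 1, ..., x p.\<close>
definition ord_stat :: "(nat \<Rightarrow> real) \<Rightarrow> nat \<Rightarrow> nat \<Rightarrow> real" where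
  "ord_stat x p j = sort (map x [1..<p+1]) ! (j - 1)"

end

theory Submission
  imports Defs
begin


lemma normal_mgf:
  assumes D: "distributed M lborel X (normal_density 0 \<sigma>)" and s: "0 < \<sigma>"
  shows "integrable M (\<lambda>\<omega>. exp (t * X \<omega>))"
    and "(\<integral>\<omega>. exp (t * X \<omega>) \<partial>M) = exp (t\<^sup>2 * \<sigma>\<^sup>2 / 2)"
proof -
  have eq: "normal_density 0 \<sigma> x * exp (t * x) = exp (t\<^sup>2 * \<sigma>\<^sup>2 / 2) * normal_density (t * \<sigma>\<^sup>2) \<sigma> x" for x
  proof -
    have "- (x - 0)\<^sup>2 / (2 * \<sigma>\<^sup>2) + t * x = t\<^sup>2 * \<sigma>\<^sup>2 / 2 + - (x - t * \<sigma>\<^sup>2)\<^sup>2 / (2 * \<sigma>\<^sup>2)"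
      using s by (simp add: field_simps power2_eq_square)
    then show ?thesis unfolding normal_density_def
      by (simp add: exp_add[symmetric] mult.commute mult.left_commute)
  qed
  have "integrable lborel (\<lambda>x. normal_density 0 \<sigma> x * exp (t * x))"
    unfolding eq using s by simp
  then show "integrable M (\<lambda>\<omega>. exp (t * X \<omega>))"
    using distributed_integrable[OF D, of "\<lambda>x. exp (t * x)"] by simp
  have "(\<integral>x. normal_density 0 \<sigma> x * exp (t * x) \<partial>lborel) = exp (t\<^sup>2 * \<sigma>\<^sup>2 / 2)"
    unfolding eq using s by simp
  then show "(\<integral>\<omega>. exp (t * X \<omega>) \<partial>M) = exp (t\<^sup>2 * \<sigma>\<^sup>2 / 2)"
    using distributed_integral[OF D, of "\<lambda>x. exp (t * x)"] by simp
qed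

lemma lin_gauss:
  assumes P: "prob_space M" and Ym[measurable]: "Y \<in> borel_measurable M"
    and G: "(AE \<omega> in M. Y \<omega> = 0) \<or> (\<exists>\<sigma>>0. distributed M lborel Y (normal_density 0 \<sigma>))"
  shows "integrable M (\<lambda>\<omega>. (Y \<omega>)\<^sup>2)" "expect M Y = 0"
    "integrable M (\<lambda>\<omega>. exp (t * Y \<omega>))"
    "expect M (\<lambda>\<omega>. exp (t * Y \<omega>)) = exp (t\<^sup>2 * var M Y / 2)"
proof -
  interpret prob_space M by (rule P)
  have "integrable M (\<lambda>\<omega>. (Y \<omega>)\<^sup>2) \<and> expect M Y = 0 \<and>
    integrable M (\<lambda>\<omega>. exp (t * Y \<omega>)) \<and> expect M (\<lambda>\<omega>. exp (t * Y \<omega>)) = exp (t\<^sup>2 * var M Y / 2)"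
    using G
  proof
    assume AE: "AE \<omega> in M. Y \<omega> = 0"
    have i1: "integrable M (\<lambda>\<omega>. (Y \<omega>)\<^sup>2)"
      using integrable_cong_AE[of "\<lambda>\<omega>. (Y \<omega>)\<^sup>2" M "\<lambda>_. 0"] AE by (auto elim: AE_mp)
    have e: "expect M Y = 0" unfolding expect_def
      using integral_cong_AE[of Y M "\<lambda>_. 0"] AE by auto
    have v: "var M Y = 0" unfolding var_def e
      using integral_cong_AE[of "\<lambda>\<omega>. (Y \<omega> - 0)\<^sup>2" M "\<lambda>_. 0"] AE by (auto elim: AE_mp)
    have ae1: "AE \<omega> in M. exp (t * Y \<omega>) = 1" using AE by (auto elim: AE_mp)
    have i3: "integrable M (\<lambda>\<omega>. exp (t * Y \<omega>))"
      using integrable_cong_AE[of "\<lambda>\<omega>. exp (t * Y \<omega>)" M "\<lambda>_. 1"] ae1 by auto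
    have "expect M (\<lambda>\<omega>. exp (t * Y \<omega>)) = 1" unfolding expect_def
      using integral_cong_AE[of "\<lambda>\<omega>. exp (t * Y \<omega>)" M "\<lambda>_. 1"] ae1 by (auto simp: prob_space)
    then show ?thesis using i1 e i3 v by simp
  next
    assume "\<exists>\<sigma>>0. distributed M lborel Y (normal_density 0 \<sigma>)"
    then obtain \<sigma> where s: "\<sigma> > 0" and D: "distributed M lborel Y (normal_density 0 \<sigma>)" by blast
    have e: "expect M Y = 0" unfolding expect_def using normal_distributed_expectation[OF s D] by simp
    have v: "var M Y = \<sigma>\<^sup>2" unfolding var_def expect_def using normal_distributed_variance[OF s D] by simp
    have "integrable lborel (\<lambda>x. normal_density 0 \<sigma> x * (x - 0)^2)"
      using s by (rule integrable_normal_moment)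
    then have i1: "integrable M (\<lambda>\<omega>. (Y \<omega>)\<^sup>2)"
      using distributed_integrable[OF D, of "\<lambda>x. x\<^sup>2"] by simp
    show ?thesis using i1 e v normal_mgf[OF D s, of t] by (simp add: expect_def)
  qed
  then show "integrable M (\<lambda>\<omega>. (Y \<omega>)\<^sup>2)" "expect M Y = 0"
    "integrable M (\<lambda>\<omega>. exp (t * Y \<omega>))"
    "expect M (\<lambda>\<omega>. exp (t * Y \<omega>)) = exp (t\<^sup>2 * var M Y / 2)" by auto
qed

lemma gv_prob: "centered_gaussian_vector M I X \<Longrightarrow> prob_space M"
  unfolding centered_gaussian_vector_def by blast

lemma gv_meas: "centered_gaussian_vector M I X \<Longrightarrow> i \<in> I \<Longrightarrow> X i \<in> borel_measurable M"
  unfolding centered_gaussian_vector_def by blast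

lemma gv_lin:
  assumes "centered_gaussian_vector M I X"
  shows "(AE \<omega> in M. (\<Sum>i\<in>I. c i * X i \<omega>) = 0) \<or>
        (\<exists>\<sigma>>0. distributed M lborel (\<lambda>\<omega>. \<Sum>i\<in>I. c i * X i \<omega>) (normal_density 0 \<sigma>))"
  using assms unfolding centered_gaussian_vector_def by blast

lemma gv_single:
  assumes G: "centered_gaussian_vector M I X" and i: "i \<in> I" and v: "var M (X i) = 1"
  shows "integrable M (\<lambda>\<omega>. exp (t * X i \<omega>))"
    "expect M (\<lambda>\<omega>. exp (t * X i \<omega>)) = exp (t\<^sup>2 / 2)"
    "integrable M (\<lambda>\<omega>. (X i \<omega>)\<^sup>2)" "expect M (X i) = 0"
proof -
  have fin: "finite I" using G unfolding centered_gaussian_vector_def by blast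
  define c where "c = (\<lambda>j. if j = i then (1::real) else 0)"
  have eq: "(\<Sum>j\<in>I. c j * X j \<omega>) = X i \<omega>" for \<omega>
  proof -
    have "(\<Sum>k\<in>I. c k * X k \<omega>) = (\<Sum>k\<in>I. if k \<in> {i} then X k \<omega> else 0)"
      by (rule sum.cong) (auto simp: c_def)
    also have "\<dots> = (\<Sum>k\<in>I \<inter> {i}. X k \<omega>)"
      using fin by (simp add: sum.inter_restrict)
    also have "I \<inter> {i} = {i}" using i by auto
    finally show ?thesis by simp
  qed
  have L: "(AE \<omega> in M. X i \<omega> = 0) \<or> (\<exists>\<sigma>>0. distributed M lborel (X i) (normal_density 0 \<sigma>))"
    using gv_lin[OF G, of c] unfolding eq by (simp add: eta_contract_eq)
  note lg = lin_gauss[OF gv_prob[OF G] gv_meas[OF G i] L]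
  show "integrable M (\<lambda>\<omega>. exp (t * X i \<omega>))"
    "expect M (\<lambda>\<omega>. exp (t * X i \<omega>)) = exp (t\<^sup>2 / 2)"
    "integrable M (\<lambda>\<omega>. (X i \<omega>)\<^sup>2)" "expect M (X i) = 0"
    using lg(1,2) lg(3,4)[of t] v by auto
qed

lemma gv_pair:
  assumes G: "centered_gaussian_vector M I X" and i: "i \<in> I" and j: "j \<in> I" and ij: "i \<noteq> j"
    and vi: "var M (X i) = 1" and vj: "var M (X j) = 1"
  shows "integrable M (\<lambda>\<omega>. exp (t * (X i \<omega> + X j \<omega>)))"
    "expect M (\<lambda>\<omega>. exp (t * (X i \<omega> + X j \<omega>))) \<le> exp (t\<^sup>2 * (1 + \<bar>corr M (X i) (X j)\<bar>))"
proof -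
  have fin: "finite I" using G unfolding centered_gaussian_vector_def by blast
  define c where "c = (\<lambda>k. if k \<in> {i, j} then (1::real) else 0)"
  have eq: "(\<Sum>k\<in>I. c k * X k \<omega>) = X i \<omega> + X j \<omega>" for \<omega>
  proof -
    have "(\<Sum>k\<in>I. c k * X k \<omega>) = (\<Sum>k\<in>I. if k \<in> {i, j} then X k \<omega> else 0)"
      by (rule sum.cong) (auto simp: c_def)
    also have "\<dots> = (\<Sum>k\<in>I \<inter> {i, j}. X k \<omega>)"
      using fin by (simp add: sum.inter_restrict)
    also have "I \<inter> {i, j} = {i, j}" using i j by auto
    finally show "(\<Sum>k\<in>I. c k * X k \<omega>) = X i \<omega> + X j \<omega>" using ij by simp
  qed
  define Y where "Y = (\<lambda>\<omega>. X i \<omega> + X j \<omega>)"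
  have L: "(AE \<omega> in M. Y \<omega> = 0) \<or> (\<exists>\<sigma>>0. distributed M lborel Y (normal_density 0 \<sigma>))"
    using gv_lin[OF G, of c] unfolding eq Y_def by simp
  note mi[measurable] = gv_meas[OF G i] and mj[measurable] = gv_meas[OF G j]
  have Ym: "Y \<in> borel_measurable M" unfolding Y_def by measurable
  note lg = lin_gauss[OF gv_prob[OF G] Ym L]
  note si = gv_single[OF G i vi] and sj = gv_single[OF G j vj]
  have eY: "expect M Y = 0" by (rule lg(2))
  have vY: "var M Y = (\<integral>\<omega>. (Y \<omega>)\<^sup>2 \<partial>M)" unfolding var_def eY by simp
  have vi2: "(\<integral>\<omega>. (X i \<omega>)\<^sup>2 \<partial>M) = 1" using vi si(4) unfolding var_def by simp
  have vj2: "(\<integral>\<omega>. (X j \<omega>)\<^sup>2 \<partial>M) = 1" using vj sj(4) unfolding var_def by simp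
  have pw: "X i \<omega> * X j \<omega> = ((Y \<omega>)\<^sup>2 - (X i \<omega>)\<^sup>2 - (X j \<omega>)\<^sup>2) / 2" for \<omega>
    unfolding Y_def by (simp add: power2_eq_square field_simps)
  have cv: "cov M (X i) (X j) = (var M Y - 2) / 2"
  proof -
    have "cov M (X i) (X j) = (\<integral>\<omega>. X i \<omega> * X j \<omega> \<partial>M)"
      unfolding cov_def si(4) sj(4) by simp
    also have "\<dots> = (\<integral>\<omega>. ((Y \<omega>)\<^sup>2 - (X i \<omega>)\<^sup>2 - (X j \<omega>)\<^sup>2) / 2 \<partial>M)"
      by (simp only: pw)
    also have "\<dots> = ((\<integral>\<omega>. (Y \<omega>)\<^sup>2 \<partial>M) - (\<integral>\<omega>. (X i \<omega>)\<^sup>2 \<partial>M) - (\<integral>\<omega>. (X j \<omega>)\<^sup>2 \<partial>M)) / 2"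
      using lg(1) si(3) sj(3) by simp
    finally show ?thesis using vY vi2 vj2 by simp
  qed
  have cr: "corr M (X i) (X j) = (var M Y - 2) / 2"
    unfolding corr_def vi vj cv by simp
  show "integrable M (\<lambda>\<omega>. exp (t * (X i \<omega> + X j \<omega>)))" using lg(3)[of t] unfolding Y_def .
  have "expect M (\<lambda>\<omega>. exp (t * (X i \<omega> + X j \<omega>))) = exp (t\<^sup>2 * var M Y / 2)"
    using lg(4)[of t] unfolding Y_def .
  also have "\<dots> = exp (t\<^sup>2 * (1 + corr M (X i) (X j)))" unfolding cr by (simp add: field_simps)
  also have "\<dots> \<le> exp (t\<^sup>2 * (1 + \<bar>corr M (X i) (X j)\<bar>))"
    by (intro exp_mono mult_left_mono) auto
  finally show "expect M (\<lambda>\<omega>. exp (t * (X i \<omega> + X j \<omega>))) \<le> exp (t\<^sup>2 * (1 + \<bar>corr M (X i) (X j)\<bar>))" .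
qed

lemma insort_nth:
  fixes ys :: "real list"
  assumes "sorted ys" "i \<le> length ys"
  shows "insort a ys ! i = (if i = 0 then (if ys = [] then a else min a (ys!0))
     else if i = length ys then max (ys!(i-1)) a else max (ys!(i-1)) (min a (ys!i)))"
  using assms
proof (induction ys arbitrary: i)
  case Nil
  then show ?case by simp
next
  case (Cons y ys)
  have yle: "\<And>z. z \<in> set ys \<Longrightarrow> y \<le> z" using Cons.prems(1) by simp
  have sys: "sorted ys" using Cons.prems(1) by simp
  show ?case
  proof (cases "a \<le> y")
    case True
    have ge: "\<And>m. m < length (y # ys) \<Longrightarrow> a \<le> (y#ys) ! m"
    proof -
      fix m assume m: "m < length (y # ys)"
      show "a \<le> (y#ys) ! m"
      proof (cases m)
        case 0 then show ?thesis using True by simp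
      next
        case (Suc m') then have "ys ! m' \<in> set ys" using m by simp
        then show ?thesis using True yle Suc by fastforce
      qed
    qed
    show ?thesis
    proof (cases i)
      case 0 then show ?thesis using True by simp
    next
      case (Suc i')
      have r: "insort a (y # ys) ! i = (y#ys) ! i'" using True Suc by simp
      have g1: "a \<le> (y#ys) ! i'" using ge Suc Cons.prems(2) by simp
      show ?thesis
      proof (cases "i = length (y#ys)")
        case True then show ?thesis using r g1 Suc by (simp add: max_def)
      next
        case False
        then have "i < length (y#ys)" using Cons.prems(2) by simp
        then have "a \<le> (y#ys) ! i" using ge by blast
        then show ?thesis using r g1 Suc False by (simp add: max_def min_def)
      qed
    qed
  next
    case False
    show ?thesis
    proof (cases i)
      case 0 then show ?thesis using False by simp
    next
      case (Suc i')
      have i': "i' \<le> length ys" using Suc Cons.prems(2) by simp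
      have r: "insort a (y # ys) ! i = insort a ys ! i'" using False Suc by simp
      note IH = Cons.IH[OF sys i']
      show ?thesis
      proof (cases "i' = 0")
        case True
        show ?thesis
        proof (cases "ys = []")
          case True then show ?thesis using r IH \<open>i' = 0\<close> Suc False by (simp add: max_def)
        next
          case ne: False
          then have "y \<le> ys ! 0" using yle by (simp add: hd_conv_nth[symmetric])
          then show ?thesis using r IH \<open>i' = 0\<close> Suc False ne by (simp add: max_def min_def)
        qed
      next
        case nz: False
        then show ?thesis using r IH Suc by (simp add: nth_Cons')
      qed
    qed
  qed
qed

lemma sort_meas:
  fixes f :: "nat \<Rightarrow> 'a \<Rightarrow> real"
  assumes "\<And>j. j \<in> set xs \<Longrightarrow> f j \<in> borel_measurable M" "i < length xs"
  shows "(\<lambda>\<omega>. sort (map (\<lambda>j. f j \<omega>) xs) ! i) \<in> borel_measurable M"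
  using assms
proof (induction xs arbitrary: i)
  case Nil then show ?case by simp
next
  case (Cons x xs)
  define S where "S = (\<lambda>n \<omega>. sort (map (\<lambda>j. f j \<omega>) xs) ! n)"
  have Sm: "\<And>n. n < length xs \<Longrightarrow> S n \<in> borel_measurable M"
    unfolding S_def using Cons by auto
  have fx: "f x \<in> borel_measurable M" using Cons.prems(1) by simp
  have eq: "sort (map (\<lambda>j. f j \<omega>) (x#xs)) ! i =
     (if i = 0 then (if xs = [] then f x \<omega> else min (f x \<omega>) (S 0 \<omega>))
     else if i = length xs then max (S (i-1) \<omega>) (f x \<omega>) else max (S (i-1) \<omega>) (min (f x \<omega>) (S i \<omega>)))" for \<omega>
  proof -
    have e0: "sort (map (\<lambda>j. f j \<omega>) xs) = [] \<longleftrightarrow> xs = []"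
      by (metis length_0_conv length_map length_sort)
    show ?thesis
      using insort_nth[of "sort (map (\<lambda>j. f j \<omega>) xs)" i "f x \<omega>"] Cons.prems(2)
      by (simp add: S_def e0)
  qed
  show ?case
    unfolding eq using Cons.prems(2) Sm fx
    by (cases "i = 0"; cases "xs = []"; cases "i = length xs") (auto intro!: borel_measurable_max borel_measurable_min)
qed

lemma ord_stat_meas:
  assumes "\<And>j. j \<in> {1..p} \<Longrightarrow> f j \<in> borel_measurable M" "1 \<le> i" "i \<le> p"
  shows "(\<lambda>\<omega>. ord_stat (\<lambda>j. f j \<omega>) p i) \<in> borel_measurable M"
  unfolding ord_stat_def by (rule sort_meas) (use assms in auto)

lemma ord_stat_mem:
  assumes "1 \<le> i" "i \<le> p"
  shows "ord_stat x p i \<in> x ` {1..p}"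
proof -
  have "ord_stat x p i \<in> set (sort (map x [1..<p+1]))"
    unfolding ord_stat_def using assms by (intro nth_mem) auto
  then show ?thesis by auto
qed

lemma ord_stat_gt:
  fixes x :: "nat \<Rightarrow> real"
  assumes kp: "k < p" and c: "k + 1 \<le> card {i\<in>{1..p}. A < x i}"
  shows "A < ord_stat x p (p - k)"
proof (rule ccontr)
  assume "\<not> A < ord_stat x p (p - k)"
  define xs where "xs = sort (map x [1..<p+1])"
  define n where "n = p - k - 1"
  have len: "length xs = p" unfolding xs_def by simp
  have xn: "xs ! n \<le> A" using \<open>\<not> _\<close> unfolding ord_stat_def xs_def n_def
    by (simp add: diff_diff_add)
  have srt: "sorted xs" unfolding xs_def by simp
  have tk: "filter (\<lambda>y. A < y) (take (n+1) xs) = []"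
  proof -
    have "\<forall>y\<in>set (take (n+1) xs). y \<le> A"
    proof
      fix y assume "y \<in> set (take (n+1) xs)"
      then obtain m where m: "m < length (take (n+1) xs)" "y = take (n+1) xs ! m"
        by (auto simp: in_set_conv_nth)
      then have "m \<le> n" "m < length xs" by auto
      then have "xs ! m \<le> xs ! n" using srt len kp n_def by (intro sorted_nth_mono) auto
      then show "y \<le> A" using m xn by simp
    qed
    then show ?thesis by (auto simp: filter_empty_conv)
  qed
  have "length (filter (\<lambda>y. A < y) xs) = length (filter (\<lambda>y. A < y) (take (n+1) xs)) + length (filter (\<lambda>y. A < y) (drop (n+1) xs))"
    by (metis append_take_drop_id filter_append length_append)
  also have "\<dots> \<le> k" using tk len kp n_def by simp (metis diff_diff_cancel le_trans length_drop length_filter_le less_or_eq_imp_le Suc_diff_Suc diff_Suc_1 Suc_eq_plus1 len)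
  finally have lk: "length (filter (\<lambda>y. A < y) xs) \<le> k" .
  have "length (filter (\<lambda>y. A < y) xs) = length (filter (\<lambda>y. A < y) (map x [1..<p+1]))"
    unfolding xs_def by (metis mset_filter mset_sort size_mset)
  also have "\<dots> = card ({i. A < x i} \<inter> set [1..<p+1])"
    by (simp add: distinct_length_filter comp_def)
  also have "{i. A < x i} \<inter> set [1..<p+1] = {i\<in>{1..p}. A < x i}" by auto
  finally show False using lk c by simp
qed

lemma ord_stat_le:
  assumes "l < p" "\<And>i. i \<in> {1..p} \<Longrightarrow> x i \<le> B"
  shows "ord_stat x p (p - l) \<le> B"
proof -
  have "ord_stat x p (p - l) \<in> x ` {1..p}" by (rule ord_stat_mem) (use assms in auto)
  then show ?thesis using assms by auto
qed

lemma ord_stat_nonneg: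
  assumes "l < p" "\<And>i. i \<in> {1..p} \<Longrightarrow> 0 \<le> x i"
  shows "0 \<le> ord_stat x p (p - l)"
proof -
  have "ord_stat x p (p - l) \<in> x ` {1..p}" by (rule ord_stat_mem) (use assms in auto)
  then show ?thesis using assms by auto
qed

lemma second_moment:
  fixes Z :: "nat \<Rightarrow> 'a \<Rightarrow> real"
  assumes P: "prob_space M" and fin: "finite G"
    and meas: "\<And>i. i \<in> G \<Longrightarrow> Z i \<in> borel_measurable M"
    and bnd: "\<And>i \<omega>. i \<in> G \<Longrightarrow> \<omega> \<in> space M \<Longrightarrow> 0 \<le> Z i \<omega> \<and> Z i \<omega> \<le> B"
    and lo: "\<And>i. i \<in> G \<Longrightarrow> \<alpha> \<le> expect M (Z i)"
    and hi: "\<And>i. i \<in> G \<Longrightarrow> expect M (Z i) \<le> \<beta>"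
    and pr: "\<And>i j. i \<in> G \<Longrightarrow> j \<in> G \<Longrightarrow> i \<noteq> j \<Longrightarrow> expect M (\<lambda>\<omega>. Z i \<omega> * Z j \<omega>) \<le> \<gamma>"
    and a0: "0 \<le> \<alpha>" and ag: "\<alpha>\<^sup>2 \<le> \<gamma>" and T: "T < real (card G) * \<alpha>"
  shows "measure M {\<omega>\<in>space M. (\<Sum>i\<in>G. Z i \<omega>) \<le> T}
     \<le> (real (card G) * B * \<beta> + (real (card G))\<^sup>2 * (\<gamma> - \<alpha>\<^sup>2)) / (real (card G) * \<alpha> - T)\<^sup>2"
proof -
  interpret prob_space M by (rule P)
  define q where "q = real (card G)"
  define \<mu> where "\<mu> i = expectation (Z i)" for i
  define W where "W \<omega> = (\<Sum>i\<in>G. Z i \<omega>)" for \<omega>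
  have B0: "0 \<le> B" if ne: "G \<noteq> {}"
  proof -
    obtain i where "i \<in> G" using ne by auto
    obtain \<omega> where "\<omega> \<in> space M" using not_empty by blast
    then show ?thesis using bnd[OF \<open>i \<in> G\<close>] by force
  qed
  have intZ: "integrable M (Z i)" if "i \<in> G" for i
    by (rule integrable_const_bound[where B=B]) (use bnd that meas in \<open>auto intro!: AE_I2\<close>)
  have intZZ: "integrable M (\<lambda>\<omega>. Z i \<omega> * Z j \<omega>)" if "i \<in> G" "j \<in> G" for i j
  proof (rule integrable_const_bound[where B="B*B"])
    show "AE x in M. norm (Z i x * Z j x) \<le> B * B"
      using bnd that by (auto intro!: AE_I2 mult_mono simp: abs_mult) (meson order.trans bnd)
  qed (use meas that in auto)
  have Wm[measurable]: "W \<in> borel_measurable M" unfolding W_def using meas by auto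
  have EW: "expectation W = (\<Sum>i\<in>G. \<mu> i)" unfolding W_def \<mu>_def
    by (rule Bochner_Integration.integral_sum) (use intZ in auto)
  have cross: "expectation (\<lambda>\<omega>. (Z i \<omega> - \<mu> i) * (Z j \<omega> - \<mu> j)) = expectation (\<lambda>\<omega>. Z i \<omega> * Z j \<omega>) - \<mu> i * \<mu> j"
    if "i \<in> G" "j \<in> G" for i j
  proof -
    have "(\<lambda>\<omega>. (Z i \<omega> - \<mu> i) * (Z j \<omega> - \<mu> j)) = (\<lambda>\<omega>. Z i \<omega> * Z j \<omega> - \<mu> j * Z i \<omega> - \<mu> i * Z j \<omega> + \<mu> i * \<mu> j)"
      by (auto simp: algebra_simps)
    then have "expectation (\<lambda>\<omega>. (Z i \<omega> - \<mu> i) * (Z j \<omega> - \<mu> j)) =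
       expectation (\<lambda>\<omega>. Z i \<omega> * Z j \<omega>) - \<mu> j * expectation (Z i) - \<mu> i * expectation (Z j) + \<mu> i * \<mu> j"
      using intZ[OF that(1)] intZ[OF that(2)] intZZ[OF that] by (simp add: prob_space)
    then show ?thesis unfolding \<mu>_def by simp
  qed
  have intC: "integrable M (\<lambda>\<omega>. (Z i \<omega> - \<mu> i) * (Z j \<omega> - \<mu> j))" if "i \<in> G" "j \<in> G" for i j
  proof -
    have "(\<lambda>\<omega>. (Z i \<omega> - \<mu> i) * (Z j \<omega> - \<mu> j)) = (\<lambda>\<omega>. Z i \<omega> * Z j \<omega> - \<mu> j * Z i \<omega> - \<mu> i * Z j \<omega> + \<mu> i * \<mu> j)"
      by (auto simp: algebra_simps)
    then show ?thesis using intZ[OF that(1)] intZ[OF that(2)] intZZ[OF that] by simp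
  qed
  have sq: "(W \<omega> - expectation W)\<^sup>2 = (\<Sum>i\<in>G. \<Sum>j\<in>G. (Z i \<omega> - \<mu> i) * (Z j \<omega> - \<mu> j))" for \<omega>
    unfolding W_def EW power2_eq_square sum_subtractf[symmetric] sum_product by simp
  have var_eq: "variance W = (\<Sum>i\<in>G. \<Sum>j\<in>G. expectation (\<lambda>\<omega>. Z i \<omega> * Z j \<omega>) - \<mu> i * \<mu> j)"
  proof -
    have "variance W = expectation (\<lambda>\<omega>. \<Sum>i\<in>G. \<Sum>j\<in>G. (Z i \<omega> - \<mu> i) * (Z j \<omega> - \<mu> j))"
      unfolding sq ..
    also have "\<dots> = (\<Sum>i\<in>G. expectation (\<lambda>\<omega>. \<Sum>j\<in>G. (Z i \<omega> - \<mu> i) * (Z j \<omega> - \<mu> j)))"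
      by (rule Bochner_Integration.integral_sum) (use intC in auto)
    also have "\<dots> = (\<Sum>i\<in>G. \<Sum>j\<in>G. expectation (\<lambda>\<omega>. (Z i \<omega> - \<mu> i) * (Z j \<omega> - \<mu> j)))"
      by (intro sum.cong refl Bochner_Integration.integral_sum) (use intC in auto)
    also have "\<dots> = (\<Sum>i\<in>G. \<Sum>j\<in>G. expectation (\<lambda>\<omega>. Z i \<omega> * Z j \<omega>) - \<mu> i * \<mu> j)"
      by (intro sum.cong refl cross) auto
    finally show ?thesis .
  qed
  have diag: "expectation (\<lambda>\<omega>. Z i \<omega> * Z i \<omega>) - \<mu> i * \<mu> i \<le> B * \<beta>" if "i \<in> G" for i
  proof -
    have "expectation (\<lambda>\<omega>. Z i \<omega> * Z i \<omega>) \<le> expectation (\<lambda>\<omega>. B * Z i \<omega>)"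
      by (rule integral_mono) (use intZZ[OF that that] intZ[OF that] bnd[OF that] in \<open>auto intro!: mult_right_mono\<close>)
    also have "\<dots> = B * \<mu> i" unfolding \<mu>_def by simp
    also have "\<dots> \<le> B * \<beta>" using hi[OF that] B0 that unfolding \<mu>_def expect_def
      by (intro mult_left_mono) auto
    finally show ?thesis
      by (smt (verit) zero_le_square mult.commute)
  qed
  have mu_ge: "\<alpha> \<le> \<mu> i" if "i \<in> G" for i using lo[OF that] unfolding \<mu>_def expect_def by simp
  have offd: "expectation (\<lambda>\<omega>. Z i \<omega> * Z j \<omega>) - \<mu> i * \<mu> j \<le> \<gamma> - \<alpha>\<^sup>2"
    if "i \<in> G" "j \<in> G" "i \<noteq> j" for i j
  proof -
    have "\<alpha> * \<alpha> \<le> \<mu> i * \<mu> j" using mu_ge[OF that(1)] mu_ge[OF that(2)] a0 by (intro mult_mono) auto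
    then show ?thesis using pr[OF that] unfolding expect_def by (simp add: power2_eq_square)
  qed
  have vb: "variance W \<le> q * B * \<beta> + q\<^sup>2 * (\<gamma> - \<alpha>\<^sup>2)"
  proof -
    have "variance W \<le> (\<Sum>i\<in>G. B * \<beta> + (q - 1) * (\<gamma> - \<alpha>\<^sup>2))"
      unfolding var_eq
    proof (rule sum_mono)
      fix i assume i: "i \<in> G"
      have "(\<Sum>j\<in>G. expectation (\<lambda>\<omega>. Z i \<omega> * Z j \<omega>) - \<mu> i * \<mu> j) =
        (expectation (\<lambda>\<omega>. Z i \<omega> * Z i \<omega>) - \<mu> i * \<mu> i) + (\<Sum>j\<in>G-{i}. expectation (\<lambda>\<omega>. Z i \<omega> * Z j \<omega>) - \<mu> i * \<mu> j)"
        using fin i by (simp add: sum.remove)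
      also have "\<dots> \<le> B * \<beta> + (\<Sum>j\<in>G-{i}. \<gamma> - \<alpha>\<^sup>2)"
        by (intro add_mono diag i sum_mono offd) (use i in auto)
      also have "\<dots> = B * \<beta> + (q - 1) * (\<gamma> - \<alpha>\<^sup>2)"
      proof -
        have "card G \<ge> 1" using fin i by (metis card_0_eq empty_iff less_one not_le)
        then show ?thesis using fin i by (simp add: q_def card_Diff_singleton of_nat_diff)
      qed
      finally show "(\<Sum>j\<in>G. expectation (\<lambda>\<omega>. Z i \<omega> * Z j \<omega>) - \<mu> i * \<mu> j) \<le> B * \<beta> + (q - 1) * (\<gamma> - \<alpha>\<^sup>2)" .
    qed
    also have "\<dots> = q * (B * \<beta> + (q - 1) * (\<gamma> - \<alpha>\<^sup>2))" by (simp add: q_def)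
    also have "\<dots> \<le> q * B * \<beta> + q\<^sup>2 * (\<gamma> - \<alpha>\<^sup>2)"
    proof -
      have "0 \<le> q * (\<gamma> - \<alpha>\<^sup>2)" using ag by (simp add: q_def)
      then show ?thesis by (simp add: power2_eq_square algebra_simps)
    qed
    finally show ?thesis .
  qed
  have qa: "q * \<alpha> \<le> expectation W"
  proof -
    have "q * \<alpha> = (\<Sum>i\<in>G. \<alpha>)" by (simp add: q_def)
    also have "\<dots> \<le> (\<Sum>i\<in>G. \<mu> i)" by (intro sum_mono mu_ge)
    finally show ?thesis using EW by simp
  qed
  define a where "a = expectation W - T"
  have a: "0 < a" using qa T unfolding a_def q_def by simp
  have intW2: "integrable M (\<lambda>x. (W x)\<^sup>2)"
  proof -
    have "(\<lambda>x. (W x)\<^sup>2) = (\<lambda>x. \<Sum>i\<in>G. \<Sum>j\<in>G. Z i x * Z j x)"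
      unfolding W_def power2_eq_square sum_product by simp
    then show ?thesis using intZZ by simp
  qed
  have "measure M {\<omega>\<in>space M. W \<omega> \<le> T} \<le> prob {x\<in>space M. a \<le> \<bar>W x - expectation W\<bar>}"
    by (intro finite_measure_mono) (auto simp: a_def)
  also have "\<dots> \<le> variance W / a\<^sup>2"
    by (rule Chebyshev_inequality[OF _ intW2 a]) simp
  also have "\<dots> \<le> (q * B * \<beta> + q\<^sup>2 * (\<gamma> - \<alpha>\<^sup>2)) / a\<^sup>2"
    using vb a by (simp add: divide_right_mono)
  also have "\<dots> \<le> (q * B * \<beta> + q\<^sup>2 * (\<gamma> - \<alpha>\<^sup>2)) / (q * \<alpha> - T)\<^sup>2"
  proof (rule divide_left_mono)
    show "0 \<le> q * B * \<beta> + q\<^sup>2 * (\<gamma> - \<alpha>\<^sup>2)"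
    proof -
      have "0 \<le> variance W" by (rule Bochner_Integration.integral_nonneg) simp
      then show ?thesis using vb by linarith
    qed
    show "(q * \<alpha> - T)\<^sup>2 \<le> a\<^sup>2" using qa T a unfolding a_def q_def
      by (intro power_mono) auto
    show "0 < a\<^sup>2 * (q * \<alpha> - T)\<^sup>2" using a T unfolding q_def by simp
  qed
  finally show ?thesis unfolding W_def q_def .
qed

definition trunc :: "real \<Rightarrow> real \<Rightarrow> real \<Rightarrow> real" where
  "trunc v L x = (if v < x \<and> x \<le> v + 2 * L then exp ((v + L) * (x - v)) else 0)"

lemma trunc_nonneg: "0 \<le> trunc v L x" unfolding trunc_def by simp

lemma trunc_le_B:
  assumes "0 \<le> v" "0 \<le> L" shows "trunc v L x \<le> exp (2 * (v + L) * L)"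
proof -
  have "(v + L) * (x - v) \<le> 2 * (v + L) * L" if "v < x" "x \<le> v + 2 * L"
    using that assms by (intro order.trans[OF mult_left_mono[of "x - v" "2 * L"]]) auto
  then show ?thesis unfolding trunc_def by auto
qed

lemma trunc_le_exp: "trunc v L x \<le> exp ((v + L) * (x - v))"
  unfolding trunc_def by simp

lemma trunc_pos: "0 < trunc v L x \<Longrightarrow> v < x"
  unfolding trunc_def by (auto split: if_splits)

lemma trunc_meas[measurable]: "trunc v L \<in> borel_measurable borel"
  unfolding trunc_def by measurable

lemma mgf_shift:
  assumes mi: "\<And>t. integrable M (\<lambda>\<omega>. exp (t * X \<omega>))"
    and me: "\<And>t. expect M (\<lambda>\<omega>. exp (t * X \<omega>)) = exp (t\<^sup>2 / 2)"
  shows "integrable M (\<lambda>\<omega>. exp (c + t * X \<omega>))" "expect M (\<lambda>\<omega>. exp (c + t * X \<omega>)) = exp (c + t\<^sup>2 / 2)"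
proof -
  have eq: "(\<lambda>\<omega>. exp (c + t * X \<omega>)) = (\<lambda>\<omega>. exp c * exp (t * X \<omega>))" by (simp add: exp_add)
  show "integrable M (\<lambda>\<omega>. exp (c + t * X \<omega>))" unfolding eq using mi by simp
  show "expect M (\<lambda>\<omega>. exp (c + t * X \<omega>)) = exp (c + t\<^sup>2 / 2)"
    unfolding eq expect_def using me[of t] by (simp add: expect_def exp_add)
qed

lemma tail_bound:
  assumes P: "prob_space M" and Xm[measurable]: "X \<in> borel_measurable M"
    and mi: "\<And>t. integrable M (\<lambda>\<omega>. exp (t * X \<omega>))"
    and me: "\<And>t. expect M (\<lambda>\<omega>. exp (t * X \<omega>)) = exp (t\<^sup>2 / 2)"
    and w: "0 \<le> w"
  shows "measure M {\<omega>\<in>space M. w < \<bar>X \<omega>\<bar>} \<le> 2 * exp (- (w\<^sup>2) / 2)"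
proof -
  interpret prob_space M by (rule P)
  let ?A = "{\<omega>\<in>space M. w < \<bar>X \<omega>\<bar>}"
  have Am: "?A \<in> sets M" by measurable
  have pw: "indicator ?A \<omega> \<le> exp (- w\<^sup>2 + w * X \<omega>) + exp (- w\<^sup>2 + (- w) * X \<omega>)" for \<omega>
  proof (cases "\<omega> \<in> ?A")
    case True
    then have "w < \<bar>X \<omega>\<bar>" by simp
    then have "w * w \<le> w * \<bar>X \<omega>\<bar>" using w by (intro mult_left_mono) auto
    then have "0 \<le> - w\<^sup>2 + w * X \<omega> \<or> 0 \<le> - w\<^sup>2 + (- w) * X \<omega>"
      by (cases "0 \<le> X \<omega>") (auto simp: power2_eq_square)
    then have "1 \<le> exp (- w\<^sup>2 + w * X \<omega>) \<or> 1 \<le> exp (- w\<^sup>2 + (- w) * X \<omega>)" by auto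
    then show ?thesis using True by (auto intro: add_increasing add_increasing2)
  next
    case False then show ?thesis by (simp add: add_nonneg_nonneg)
  qed
  have "measure M ?A = expectation (indicator ?A)" using Am by simp
  also have "\<dots> \<le> expectation (\<lambda>\<omega>. exp (- w\<^sup>2 + w * X \<omega>) + exp (- w\<^sup>2 + (- w) * X \<omega>))"
  proof (rule integral_mono)
    show "integrable M (indicator ?A :: _ \<Rightarrow> real)"
      by (rule integrable_const_bound[where B=1]) (use Am in auto)
    show "integrable M (\<lambda>\<omega>. exp (- w\<^sup>2 + w * X \<omega>) + exp (- w\<^sup>2 + (- w) * X \<omega>))"
      by (intro Bochner_Integration.integrable_add mgf_shift(1)[OF mi me])
  qed (rule pw)
  also have "\<dots> = exp (- w\<^sup>2 + w\<^sup>2 / 2) + exp (- w\<^sup>2 + (-w)\<^sup>2 / 2)"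
    using mgf_shift[OF mi me, of "- w\<^sup>2" w] mgf_shift[OF mi me, of "- w\<^sup>2" "-w"]
    by (simp add: expect_def)
  also have "\<dots> = 2 * exp (- (w\<^sup>2) / 2)" by simp
  finally show ?thesis .
qed

lemma trunc_expect:
  assumes P: "prob_space M" and Xm[measurable]: "X \<in> borel_measurable M"
    and mi: "\<And>t. integrable M (\<lambda>\<omega>. exp (t * X \<omega>))"
    and me: "\<And>t. expect M (\<lambda>\<omega>. exp (t * X \<omega>)) = exp (t\<^sup>2 / 2)"
    and v: "0 \<le> v" and L: "0 \<le> L"
  shows "integrable M (\<lambda>\<omega>. trunc v L (X \<omega>))"
    "exp (L\<^sup>2 / 2 - v\<^sup>2 / 2) - 2 * exp (- (v\<^sup>2) / 2) \<le> expect M (\<lambda>\<omega>. trunc v L (X \<omega>))"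
    "expect M (\<lambda>\<omega>. trunc v L (X \<omega>)) \<le> exp (L\<^sup>2 / 2 - v\<^sup>2 / 2)"
proof -
  interpret prob_space M by (rule P)
  define a where "a = v + L"
  show I: "integrable M (\<lambda>\<omega>. trunc v L (X \<omega>))"
    by (rule integrable_const_bound[where B="exp (2 * (v + L) * L)"])
       (use trunc_le_B[OF v L] trunc_nonneg in auto)
  note ms = mgf_shift[OF mi me]
  have e1: "exp (a * (x - v)) = exp (- a * v + a * x)" for x by (simp add: algebra_simps)
  have e2: "exp (a * (x - v)) * exp (L * (v - x)) = exp ((- a * v + L * v) + (a - L) * x)" for x
    by (simp add: exp_add[symmetric] algebra_simps)
  have e3: "exp (a * (x - v)) * exp (L * (x - v - 2 * L)) = exp ((- a * v - L * v - 2 * L * L) + (a + L) * x)" for x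
    by (simp add: exp_add[symmetric] algebra_simps)
  have pw: "exp (- a * v + a * x) \<le> trunc v L x + exp ((- a * v + L * v) + (a - L) * x) + exp ((- a * v - L * v - 2 * L * L) + (a + L) * x)" for x
  proof -
    have "exp (a * (x - v)) \<le> trunc v L x + exp (a * (x - v)) * exp (L * (v - x)) + exp (a * (x - v)) * exp (L * (x - v - 2 * L))"
    proof (cases "v < x \<and> x \<le> v + 2 * L")
      case True then show ?thesis unfolding trunc_def a_def by (simp add: add_nonneg_nonneg)
    next
      case False
      then consider "x \<le> v" | "v + 2 * L < x" by linarith
      then show ?thesis
      proof cases
        case 1
        then have "1 \<le> exp (L * (v - x))" using L by (simp add: mult_nonneg_nonneg)
        then have h: "exp (a * (x - v)) * 1 \<le> exp (a * (x - v)) * exp (L * (v - x))"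
          by (intro mult_left_mono) auto
        have "0 \<le> exp (a * (x - v)) * exp (L * (x - v - 2 * L))" by simp
        then show ?thesis using h trunc_nonneg[of v L x] by linarith
      next
        case 2
        then have "1 \<le> exp (L * (x - v - 2 * L))" using L by (simp add: mult_nonneg_nonneg)
        then have h: "exp (a * (x - v)) * 1 \<le> exp (a * (x - v)) * exp (L * (x - v - 2 * L))"
          by (intro mult_left_mono) auto
        have "0 \<le> exp (a * (x - v)) * exp (L * (v - x))" by simp
        then show ?thesis using h trunc_nonneg[of v L x] by linarith
      qed
    qed
    then show ?thesis using e1[of x] e2[of x] e3[of x] by linarith
  qed
  have E0: "expect M (\<lambda>\<omega>. exp (- a * v + a * X \<omega>)) = exp (L\<^sup>2 / 2 - v\<^sup>2 / 2)"
    unfolding ms(2) a_def by (rule arg_cong[where f=exp]) (simp add: power2_eq_square field_simps)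
  have E2: "expect M (\<lambda>\<omega>. exp ((- a * v + L * v) + (a - L) * X \<omega>)) = exp (- (v\<^sup>2) / 2)"
    unfolding ms(2) a_def by (rule arg_cong[where f=exp]) (simp add: power2_eq_square field_simps)
  have E3: "expect M (\<lambda>\<omega>. exp ((- a * v - L * v - 2 * L * L) + (a + L) * X \<omega>)) = exp (- (v\<^sup>2) / 2)"
    unfolding ms(2) a_def by (rule arg_cong[where f=exp]) (simp add: power2_eq_square field_simps)
  have "exp (L\<^sup>2 / 2 - v\<^sup>2 / 2) \<le> expect M (\<lambda>\<omega>. trunc v L (X \<omega>) + exp ((- a * v + L * v) + (a - L) * X \<omega>) + exp ((- a * v - L * v - 2 * L * L) + (a + L) * X \<omega>))"
    unfolding E0[symmetric] expect_def
  proof (rule integral_mono)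
    show "integrable M (\<lambda>\<omega>. exp (- a * v + a * X \<omega>))" by (rule ms(1))
    show "integrable M (\<lambda>\<omega>. trunc v L (X \<omega>) + exp ((- a * v + L * v) + (a - L) * X \<omega>) + exp ((- a * v - L * v - 2 * L * L) + (a + L) * X \<omega>))"
      by (intro Bochner_Integration.integrable_add I ms(1))
  qed (rule pw)
  also have "\<dots> = expect M (\<lambda>\<omega>. trunc v L (X \<omega>)) + 2 * exp (- (v\<^sup>2) / 2)"
    using I ms E2 E3 unfolding expect_def by simp
  finally show "exp (L\<^sup>2 / 2 - v\<^sup>2 / 2) - 2 * exp (- (v\<^sup>2) / 2) \<le> expect M (\<lambda>\<omega>. trunc v L (X \<omega>))" by simp
  have "expect M (\<lambda>\<omega>. trunc v L (X \<omega>)) \<le> expect M (\<lambda>\<omega>. exp (- a * v + a * X \<omega>))"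
    unfolding expect_def
  proof (rule integral_mono)
    show "integrable M (\<lambda>\<omega>. exp (- a * v + a * X \<omega>))" by (rule ms(1))
    show "trunc v L (X \<omega>) \<le> exp (- a * v + a * X \<omega>)" for \<omega>
      using trunc_le_exp[of v L "X \<omega>"] e1[of "X \<omega>"] unfolding a_def by simp
  qed (use I in auto)
  then show "expect M (\<lambda>\<omega>. trunc v L (X \<omega>)) \<le> exp (L\<^sup>2 / 2 - v\<^sup>2 / 2)" using E0 by simp
qed

lemma trunc_pair:
  assumes P: "prob_space M" and Xm[measurable]: "X \<in> borel_measurable M" and Ym[measurable]: "Y \<in> borel_measurable M"
    and mi: "integrable M (\<lambda>\<omega>. exp ((v + L) * (X \<omega> + Y \<omega>)))"
    and me: "expect M (\<lambda>\<omega>. exp ((v + L) * (X \<omega> + Y \<omega>))) \<le> K"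
    and v: "0 \<le> v" and L: "0 \<le> L"
  shows "expect M (\<lambda>\<omega>. trunc v L (X \<omega>) * trunc v L (Y \<omega>)) \<le> exp (- 2 * (v + L) * v) * K"
proof -
  interpret prob_space M by (rule P)
  define a where "a = v + L"
  have I: "integrable M (\<lambda>\<omega>. trunc v L (X \<omega>) * trunc v L (Y \<omega>))"
    by (rule integrable_const_bound[where B="exp (2 * (v + L) * L) * exp (2 * (v + L) * L)"])
       (use trunc_le_B[OF v L] trunc_nonneg in \<open>auto intro!: mult_mono simp: abs_mult\<close>)
  have pw: "trunc v L x * trunc v L y \<le> exp (- 2 * a * v) * exp (a * (x + y))" for x y
  proof -
    have "trunc v L x * trunc v L y \<le> exp (a * (x - v)) * exp (a * (y - v))"
      using trunc_le_exp trunc_nonneg unfolding a_def by (intro mult_mono) auto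
    also have "\<dots> = exp (- 2 * a * v) * exp (a * (x + y))" by (simp add: exp_add[symmetric] algebra_simps)
    finally show ?thesis .
  qed
  have "expect M (\<lambda>\<omega>. trunc v L (X \<omega>) * trunc v L (Y \<omega>)) \<le> expect M (\<lambda>\<omega>. exp (- 2 * a * v) * exp (a * (X \<omega> + Y \<omega>)))"
    unfolding expect_def by (rule integral_mono) (use I mi pw in \<open>auto simp: a_def\<close>)
  also have "\<dots> = exp (- 2 * a * v) * expect M (\<lambda>\<omega>. exp (a * (X \<omega> + Y \<omega>)))"
    unfolding expect_def by simp
  also have "\<dots> \<le> exp (- 2 * a * v) * K" using me unfolding a_def by (intro mult_left_mono) auto
  finally show ?thesis unfolding a_def by simp
qed



definition sq_ln :: "nat \<Rightarrow> real" where "sq_ln p = sqrt (2 * ln (real p))"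
definition Lf :: "nat \<Rightarrow> real" where "Lf p = ln (real p) powr (1/4)"
definition vf :: "real \<Rightarrow> nat \<Rightarrow> real" where "vf e p = (1 - e/2) * sq_ln p"
definition wfn :: "real \<Rightarrow> nat \<Rightarrow> real" where "wfn e p = (1 + e/2) * sq_ln p"
definition Bf :: "real \<Rightarrow> nat \<Rightarrow> real" where "Bf e p = exp (2 * (vf e p + Lf p) * Lf p)"
definition E0f :: "real \<Rightarrow> nat \<Rightarrow> real" where "E0f e p = exp ((Lf p)\<^sup>2 / 2 - (vf e p)\<^sup>2 / 2)"
definition cf :: "nat \<Rightarrow> real" where "cf p = 1 - 2 * exp (- (Lf p)\<^sup>2 / 2)"
definition df :: "real \<Rightarrow> nat \<Rightarrow> nat" where "df e p = nat \<lceil>real p powr (e/2)\<rceil>"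
definition qf :: "real \<Rightarrow> nat \<Rightarrow> nat" where "qf e p = p div df e p"
definition Rf :: "real \<Rightarrow> nat \<Rightarrow> real" where "Rf e p = Bf e p / (real (qf e p) * E0f e p)"

lemma ln_nat_at_top: "filterlim (\<lambda>p::nat. ln (real p)) at_top at_top"
  using filterlim_compose[OF ln_at_top filterlim_real_sequentially] by simp

lemma powr_nat_at_top:
  assumes "0 < r" shows "filterlim (\<lambda>p::nat. real p powr r) at_top at_top"
proof -
  have "filterlim (\<lambda>p::nat. r * ln (real p)) at_top at_top"
    by (rule filterlim_tendsto_pos_mult_at_top[OF tendsto_const assms ln_nat_at_top])
  then have "filterlim (\<lambda>p::nat. exp (r * ln (real p))) at_top at_top"
    using filterlim_compose[OF exp_at_top] by blast
  moreover have ev: "eventually (\<lambda>p::nat. exp (r * ln (real p)) = real p powr r) at_top"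
    using eventually_gt_at_top[of 0] by eventually_elim (simp add: powr_def)
  ultimately show ?thesis using filterlim_cong[OF refl refl ev] by simp
qed

lemma sq_ln_sq: assumes "1 \<le> p" shows "(sq_ln p)\<^sup>2 = 2 * ln (real p)"
proof -
  have "1 \<le> real p" using assms by simp
  then have "0 \<le> ln (real p)" by (rule ln_ge_zero)
  then show ?thesis unfolding sq_ln_def by simp
qed

lemma sq_ln_nonneg: assumes "1 \<le> p" shows "0 \<le> sq_ln p"
proof -
  have "1 \<le> real p" using assms by simp
  then have "0 \<le> ln (real p)" by (rule ln_ge_zero)
  then show ?thesis unfolding sq_ln_def by simp
qed

lemma Lf_nonneg: "0 \<le> Lf p" unfolding Lf_def by simp

lemma Lf_sq: "1 \<le> p \<Longrightarrow> (Lf p)\<^sup>2 = sqrt (ln (real p))"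
proof -
  assume "1 \<le> p"
  then have u: "0 \<le> ln (real p)" by simp
  have "(Lf p)\<^sup>2 = ln (real p) powr (1/4) * ln (real p) powr (1/4)" unfolding Lf_def power2_eq_square ..
  also have "\<dots> = ln (real p) powr (1/2)" using u by (simp add: powr_add[symmetric])
  also have "\<dots> = sqrt (ln (real p))" using u by (simp add: powr_half_sqrt)
  finally show ?thesis .
qed

lemma cf_lim: "(cf \<longlongrightarrow> 1) at_top"
proof -
  have sq: "filterlim (\<lambda>p::nat. sqrt (ln (real p))) at_top at_top"
    using filterlim_compose[OF sqrt_at_top ln_nat_at_top] by simp
  have "filterlim (\<lambda>p::nat. (- 1 / 2) * sqrt (ln (real p))) at_bot at_top"
    using filterlim_tendsto_neg_mult_at_bot[OF tendsto_const[of "-1/2"] _ sq] by simp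
  moreover have ev: "eventually (\<lambda>p::nat. - (Lf p)\<^sup>2 / 2 = (- 1 / 2) * sqrt (ln (real p))) at_top"
    using eventually_ge_at_top[of 1] by eventually_elim (simp add: Lf_sq)
  ultimately have "filterlim (\<lambda>p::nat. - (Lf p)\<^sup>2 / 2) at_bot at_top"
    using filterlim_cong[OF refl refl ev] by simp
  then have "((\<lambda>p. exp (- (Lf p)\<^sup>2 / 2)) \<longlongrightarrow> 0) at_top"
    using filterlim_compose[OF exp_at_bot] by blast
  then have "((\<lambda>p. 1 - 2 * exp (- (Lf p)\<^sup>2 / 2)) \<longlongrightarrow> 1 - 2 * 0) at_top"
    by (intro tendsto_intros)
  then show ?thesis unfolding cf_def by simp
qed

lemma b1_lim:
  assumes e: "0 < e"
  shows "((\<lambda>p. 2 * real p * exp (- (wfn e p)\<^sup>2 / 2)) \<longlongrightarrow> 0) at_top"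
proof (rule tendsto_sandwich[where f="\<lambda>_. 0" and h="\<lambda>p. 2 * real p powr (- e / 2)"])
  show "eventually (\<lambda>p. 0 \<le> 2 * real p * exp (- (wfn e p)\<^sup>2 / 2)) at_top" by simp
  show "eventually (\<lambda>p. 2 * real p * exp (- (wfn e p)\<^sup>2 / 2) \<le> 2 * real p powr (- e / 2)) at_top"
    using eventually_ge_at_top[of 1]
  proof eventually_elim
    case (elim p)
    then have u: "0 \<le> ln (real p)" and p0: "0 < real p" by auto
    have "(wfn e p)\<^sup>2 / 2 = (1 + e/2)\<^sup>2 * ln (real p)"
      unfolding wfn_def power_mult_distrib sq_ln_sq[OF elim] by simp
    also have "\<dots> \<ge> (1 + e/2) * ln (real p)"
      using u e by (intro mult_right_mono) (auto simp: power2_eq_square)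
    finally have "exp (- (wfn e p)\<^sup>2 / 2) \<le> exp (- ((1 + e/2) * ln (real p)))" by simp
    then have "real p * exp (- (wfn e p)\<^sup>2 / 2) \<le> exp (ln (real p)) * exp (- ((1 + e/2) * ln (real p)))"
      using p0 by simp
    also have "\<dots> = exp ((- e / 2) * ln (real p))"
      unfolding exp_add[symmetric] by (rule arg_cong[where f=exp]) (simp add: algebra_simps)
    also have "\<dots> = real p powr (- e / 2)" using p0 by (simp add: powr_def)
    finally show ?case by simp
  qed
  show "((\<lambda>p. 2 * real p powr (- e / 2)) \<longlongrightarrow> 0) at_top"
    using tendsto_mult[OF tendsto_const tendsto_neg_powr[OF _ filterlim_real_sequentially, of "- e / 2"], of 2] e
    by simp
qed simp

lemma df_bounds:
  assumes p: "1 \<le> p" and e: "0 < e"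
  shows "real p powr (e/2) \<le> real (df e p)" "real (df e p) \<le> 2 * real p powr (e/2)" "1 \<le> df e p"
proof -
  have p1: "1 \<le> real p" using p by simp
  have g1: "1 \<le> real p powr (e/2)" using p1 e by (simp add: ge_one_powr_ge_zero)
  have "real (df e p) = real_of_int \<lceil>real p powr (e/2)\<rceil>" unfolding df_def using g1 by simp
  then show a: "real p powr (e/2) \<le> real (df e p)" "real (df e p) \<le> 2 * real p powr (e/2)"
    using g1 by linarith+
  show "1 \<le> df e p" using a g1 by linarith
qed

lemma q_lower:
  assumes e: "0 < e" "e < 2"
  shows "eventually (\<lambda>p. real p powr (1 - e/2) / 4 \<le> real (qf e p)) at_top"
proof -
  have "eventually (\<lambda>p. 4 \<le> real p powr (1 - e/2)) at_top"
    using powr_nat_at_top[of "1 - e/2"] e by (simp add: filterlim_at_top)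
  then show ?thesis using eventually_ge_at_top[of 1]
  proof eventually_elim
    case (elim p)
    note db = df_bounds[OF elim(2) e(1)]
    define d where "d = df e p"
    define q where "q = qf e p"
    have d0: "0 < d" using db unfolding d_def by simp
    have "p = d * q + p mod d" unfolding q_def qf_def d_def by simp
    moreover have "p mod d < d" using d0 by simp
    ultimately have "p < d * (q + 1)" by (metis add_mult_distrib2 mult.right_neutral nat_add_left_cancel_less)
    then have lt: "real p < real d * (real q + 1)" by (metis of_nat_1 of_nat_add of_nat_less_iff of_nat_mult)
    have p0: "0 < real p" using elim by simp
    have pe: "0 < real p powr (e/2)" using p0 by simp
    have "real p powr (1 - e/2) = real p / real p powr (e/2)"
      using p0 by (simp add: powr_diff)
    also have "\<dots> \<le> 2 * (real p / real d)"
      using db pe d0 unfolding d_def by (simp add: field_simps)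
    also have "\<dots> < 2 * (real q + 1)" using lt d0 by (simp add: field_simps)
    finally show ?case using elim(1) unfolding q_def by argo
  qed
qed

lemma exp_H_lim:
  assumes k: "0 < \<kappa>"
  shows "((\<lambda>p::nat. exp (2 * sqrt 2 * ln (real p) powr (3/4) + 2 * ln (real p) powr (1/2) - \<kappa> * ln (real p))) \<longlongrightarrow> 0) at_top"
proof -
  define br where "br u = 2 * sqrt 2 * u powr (-1/4) + 2 * u powr (-1/2) - \<kappa>" for u :: real
  have t1: "((\<lambda>p::nat. ln (real p) powr (-1/4)) \<longlongrightarrow> 0) at_top"
    by (rule tendsto_neg_powr[OF _ ln_nat_at_top]) simp
  have t2: "((\<lambda>p::nat. ln (real p) powr (-1/2)) \<longlongrightarrow> 0) at_top"
    by (rule tendsto_neg_powr[OF _ ln_nat_at_top]) simp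
  have "((\<lambda>p::nat. br (ln (real p))) \<longlongrightarrow> 2 * sqrt 2 * 0 + 2 * 0 - \<kappa>) at_top"
    unfolding br_def by (intro tendsto_intros t1 t2)
  then have "filterlim (\<lambda>p::nat. br (ln (real p)) * ln (real p)) at_bot at_top"
    using filterlim_tendsto_neg_mult_at_bot[OF _ _ ln_nat_at_top] k by simp
  moreover have ev: "eventually (\<lambda>p::nat. br (ln (real p)) * ln (real p) =
      2 * sqrt 2 * ln (real p) powr (3/4) + 2 * ln (real p) powr (1/2) - \<kappa> * ln (real p)) at_top"
    using eventually_ge_at_top[of 3]
  proof eventually_elim
    case (elim p)
    then have "(3::real) \<le> real p" by simp
    then have "exp 1 \<le> real p" using exp_le by linarith
    then have "ln (exp 1) \<le> ln (real p)" using elim by (subst ln_le_cancel_iff) auto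
    then have u: "1 \<le> ln (real p)" by simp
    have u1: "ln (real p) powr 1 = ln (real p)" using u by simp
    have "ln (real p) powr (-1/4) * ln (real p) powr 1 = ln (real p) powr (-1/4 + 1)"
      by (rule powr_add[symmetric])
    then have a: "ln (real p) powr (-1/4) * ln (real p) = ln (real p) powr (3/4)"
      unfolding u1 by simp
    have "ln (real p) powr (-1/2) * ln (real p) powr 1 = ln (real p) powr (-1/2 + 1)"
      by (rule powr_add[symmetric])
    then have b: "ln (real p) powr (-1/2) * ln (real p) = ln (real p) powr (1/2)"
      unfolding u1 by simp
    show ?case unfolding br_def using a b by (simp add: algebra_simps)
  qed
  ultimately have "filterlim (\<lambda>p::nat. 2 * sqrt 2 * ln (real p) powr (3/4) + 2 * ln (real p) powr (1/2) - \<kappa> * ln (real p)) at_bot at_top"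
    using filterlim_cong[OF refl refl ev] by simp
  then show ?thesis using filterlim_compose[OF exp_at_bot] by blast
qed

lemma R_lim:
  assumes e: "0 < e" "e < 1"
  shows "(Rf e \<longlongrightarrow> 0) at_top"
proof (rule tendsto_sandwich[where f="\<lambda>_. 0"])
  define \<kappa> where "\<kappa> = (1 - e/2) * (e/2)"
  have k: "0 < \<kappa>" unfolding \<kappa>_def using e by simp
  show "eventually (\<lambda>p. 0 \<le> Rf e p) at_top"
    unfolding Rf_def Bf_def E0f_def by simp
  show "((\<lambda>p::nat. 4 * exp (2 * sqrt 2 * ln (real p) powr (3/4) + 2 * ln (real p) powr (1/2) - \<kappa> * ln (real p))) \<longlongrightarrow> 0) at_top"
    using tendsto_mult[OF tendsto_const exp_H_lim[OF k], of 4] by simp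
  show "eventually (\<lambda>p. Rf e p \<le> 4 * exp (2 * sqrt 2 * ln (real p) powr (3/4) + 2 * ln (real p) powr (1/2) - \<kappa> * ln (real p))) at_top"
  proof -
    have ql: "eventually (\<lambda>p. real p powr (1 - e/2) / 4 \<le> real (qf e p)) at_top"
      using q_lower[of e] e by simp
    show ?thesis using ql eventually_ge_at_top[of 3]
  proof eventually_elim
    case (elim p)
    define u where "u = ln (real p)"
    define sl where "sl = sq_ln p"
    define L where "L = Lf p"
    define v where "v = vf e p"
    define P where "P = real p powr (1 - e/2)"
    define E0 where "E0 = E0f e p"
    define B where "B = Bf e p"
    define q where "q = real (qf e p)"
    have p0: "0 < real p" using elim by simp
    have "(3::real) \<le> real p" using elim by simp
    then have "exp 1 \<le> real p" using exp_le by linarith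
    then have "ln (exp 1) \<le> ln (real p)" using p0 by (subst ln_le_cancel_iff) auto
    then have u1: "1 \<le> u" unfolding u_def by simp
    have sl2: "sl\<^sup>2 = 2 * u" unfolding sl_def u_def using elim by (simp add: sq_ln_sq)
    have sl0: "0 \<le> sl" unfolding sl_def using elim by (simp add: sq_ln_nonneg)
    have L0: "0 \<le> L" unfolding L_def by (rule Lf_nonneg)
    have L2: "L\<^sup>2 = u powr (1/2)" unfolding L_def u_def using elim u1 unfolding u_def
      by (simp add: Lf_sq powr_half_sqrt)
    have slv: "sl = sqrt 2 * u powr (1/2)"
      unfolding sl_def sq_ln_def u_def using u1 unfolding u_def by (simp add: real_sqrt_mult powr_half_sqrt)
    have slL: "sl * L = sqrt 2 * u powr (3/4)"
    proof -
      have "u powr (1/2) * u powr (1/4) = u powr (3/4)" by (simp add: powr_add[symmetric])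
      then show ?thesis unfolding slv L_def u_def by (simp add: mult.assoc Lf_def)
    qed
    have v_def': "v = (1 - e/2) * sl" unfolding v_def vf_def sl_def ..
    have vs: "v \<le> sl" unfolding v_def' using sl0 e mult_right_mono[of "1 - e/2" 1 sl] by simp
    have v2: "v\<^sup>2 / 2 - (1 - e/2) * u = - \<kappa> * u"
      unfolding v_def' power_mult_distrib sl2 \<kappa>_def by (simp add: power2_eq_square field_simps)
    have exb: "2 * (v + L) * L - (1 - e/2) * u - (L\<^sup>2 / 2 - v\<^sup>2 / 2) \<le> 2 * sqrt 2 * u powr (3/4) + 2 * u powr (1/2) - \<kappa> * u"
    proof -
      have "2 * (v + L) * L \<le> 2 * (sl + L) * L" using vs L0 by (intro mult_right_mono) auto
      also have "\<dots> = 2 * (sl * L) + 2 * L\<^sup>2" by (simp add: power2_eq_square algebra_simps)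
      also have "\<dots> = 2 * sqrt 2 * u powr (3/4) + 2 * u powr (1/2)" unfolding slL L2 by simp
      finally have c: "2 * (v + L) * L \<le> 2 * sqrt 2 * u powr (3/4) + 2 * u powr (1/2)" .
      have "0 \<le> L\<^sup>2" by simp
      then show ?thesis using c v2 by linarith
    qed
    have P: "P = exp ((1 - e/2) * u)" unfolding P_def u_def using p0 by (simp add: powr_def)
    have E0p: "0 < E0" unfolding E0_def E0f_def by simp
    have qP: "P / 4 \<le> q" using elim(1) unfolding P_def q_def by simp
    have P0: "0 < P" unfolding P by simp
    have "Rf e p = B / (q * E0)" unfolding Rf_def B_def q_def E0_def ..
    also have "\<dots> \<le> B / (P / 4 * E0)"
      using qP P0 E0p unfolding B_def Bf_def by (intro divide_left_mono mult_right_mono mult_pos_pos) auto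
    also have "\<dots> = 4 * exp (2 * (v + L) * L - (1 - e/2) * u - (L\<^sup>2 / 2 - v\<^sup>2 / 2))"
      unfolding B_def Bf_def E0_def E0f_def P exp_diff v_def L_def by simp
    also have "\<dots> \<le> 4 * exp (2 * sqrt 2 * u powr (3/4) + 2 * u powr (1/2) - \<kappa> * u)"
      using exb by simp
    finally show ?case unfolding u_def .
  qed
  qed
qed simp



lemma G_props:
  fixes d q p :: nat
  assumes d: "1 \<le> d" and q: "q = p div d"
  defines "G \<equiv> (\<lambda>j. 1 + j * d) ` {..<q}"
  shows "G \<subseteq> {1..p}" "finite G" "card G = q"
    "\<And>i j. i \<in> G \<Longrightarrow> j \<in> G \<Longrightarrow> i \<noteq> j \<Longrightarrow> (if i \<le> j then j - i else i - j) \<in> {d..p}"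
proof -
  have qd: "q * d \<le> p" unfolding q by simp
  have mem: "1 + j * d \<le> p" if "j < q" for j
  proof -
    have "(j + 1) * d \<le> q * d" using that by (intro mult_right_mono) auto
    then show ?thesis using qd d by (simp add: algebra_simps)
  qed
  show "G \<subseteq> {1..p}" unfolding G_def using mem by auto
  show "finite G" unfolding G_def by simp
  have "inj_on (\<lambda>j. 1 + j * d) {..<q}" using d by (intro inj_onI) simp
  then show "card G = q" unfolding G_def by (simp add: card_image)
  fix i j assume i: "i \<in> G" and j: "j \<in> G" and ij: "i \<noteq> j"
  obtain a where a: "a < q" "i = 1 + a * d" using i unfolding G_def by auto
  obtain b where b: "b < q" "j = 1 + b * d" using j unfolding G_def by auto
  have ab: "a \<noteq> b" using ij a b by auto
  have ip: "i \<le> p" "j \<le> p" using mem a b by auto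
  show "(if i \<le> j then j - i else i - j) \<in> {d..p}"
  proof (cases "a < b")
    case True
    then have "i \<le> j" using a b by simp
    have "j - i = (b - a) * d" using a b True by (simp add: diff_mult_distrib)
    moreover have "d \<le> (b - a) * d"
    proof -
      have "1 \<le> b - a" using True by arith
      then show ?thesis using mult_le_mono1[of 1 "b - a" d] by simp
    qed
    ultimately show ?thesis using \<open>i \<le> j\<close> ip by auto
  next
    case False
    then have "b < a" using ab by simp
    then have "j < i" using a b d by simp
    have "i - j = (a - b) * d" using a b \<open>b < a\<close> by (simp add: diff_mult_distrib)
    moreover have "d \<le> (a - b) * d"
    proof -
      have "1 \<le> a - b" using \<open>b < a\<close> by arith
      then show ?thesis using mult_le_mono1[of 1 "a - b" d] by simp
    qed
    ultimately show ?thesis using \<open>j < i\<close> ip by auto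
  qed
qed

lemma main_bound:
  fixes M :: "'a measure" and X :: "nat \<Rightarrow> 'a \<Rightarrow> real" and m :: "nat \<Rightarrow> real" and \<rho> :: "nat \<Rightarrow> real"
  assumes gauss: "centered_gaussian_vector M {1..p} X"
    and var1: "\<And>i. i \<in> {1..p} \<Longrightarrow> var M (X i) = 1"
    and corr_bd: "\<And>i j. i \<in> {1..p} \<Longrightarrow> j \<in> {1..p} \<Longrightarrow> i \<noteq> j \<Longrightarrow>
        \<bar>corr M (X i) (X j)\<bar> < \<rho> (if i \<le> j then j - i else i - j)"
    and e: "0 < e" "e < 1" and kl: "l < k"
    and ekl: "real l * (1 + e)\<^sup>2 \<le> real k * (1 - e)\<^sup>2"
    and p: "3 \<le> p" "k < p"
    and mb: "\<And>i. i \<in> {1..p} \<Longrightarrow> \<bar>m i\<bar> \<le> (e/2) * sq_ln p"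
    and R: "real k * Rf e p < cf p" and c0: "0 \<le> cf p" and q1: "1 \<le> qf e p"
  shows "1 - 2 * real p * exp (- (wfn e p)\<^sup>2 / 2)
     - (Rf e p + exp ((vf e p + Lf p)\<^sup>2 * Max (insert 0 ((\<lambda>n. \<bar>\<rho> n\<bar>) ` {df e p..p}))) - (cf p)\<^sup>2) / (cf p - real k * Rf e p)\<^sup>2
     \<le> measure M {\<omega> \<in> space M.
               real k * (ord_stat (\<lambda>i. \<bar>X i \<omega> + m i\<bar>) p (p - k))\<^sup>2
             > real l * (ord_stat (\<lambda>i. \<bar>X i \<omega> + m i\<bar>) p (p - l))\<^sup>2}"
proof -
  interpret prob_space M by (rule gv_prob[OF gauss])
  define s where "s = sq_ln p"
  define v where "v = vf e p"
  define w where "w = wfn e p"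
  define L where "L = Lf p"
  define a where "a = v + L"
  define B where "B = Bf e p"
  define E0 where "E0 = E0f e p"
  define c where "c = cf p"
  define d where "d = df e p"
  define q where "q = qf e p"
  define G where "G = (\<lambda>j. 1 + j * d) ` {..<q}"
  define mx where "mx = Max (insert 0 ((\<lambda>n. \<bar>\<rho> n\<bar>) ` {d..p}))"
  define \<theta> where "\<theta> = a\<^sup>2 * mx"
  define R where "R = Rf e p"
  have p1: "1 \<le> p" using p by simp
  have s0: "0 \<le> s" unfolding s_def using p1 by (rule sq_ln_nonneg)
  have v0: "0 \<le> v" unfolding v_def vf_def s_def[symmetric] using s0 e by simp
  have w0: "0 \<le> w" unfolding w_def wfn_def s_def[symmetric] using s0 e by simp
  have L0: "0 \<le> L" unfolding L_def by (rule Lf_nonneg)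
  have d1: "1 \<le> d" unfolding d_def using df_bounds[OF p1 e(1)] by simp
  note Gp = G_props[OF d1 q_def[unfolded qf_def d_def[symmetric]], folded G_def]
  have Xm[measurable]: "\<And>i. i \<in> {1..p} \<Longrightarrow> X i \<in> borel_measurable M" by (rule gv_meas[OF gauss])
  note sing = gv_single[OF gauss _ var1]
  have mx0: "0 \<le> mx" unfolding mx_def by (intro Max_ge) auto
  have th0: "0 \<le> \<theta>" unfolding \<theta>_def using mx0 by simp
  have B0: "0 < B" unfolding B_def Bf_def by simp
  have E00: "0 < E0" unfolding E0_def E0f_def by simp
  have c1: "c \<le> 1" unfolding c_def cf_def by simp
  have q0: "0 < real q" using q1 unfolding q_def by simp
  define bad1 where "bad1 = (\<Union>i\<in>{1..p}. {\<omega>\<in>space M. w < \<bar>X i \<omega>\<bar>})"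
  have bad1m: "bad1 \<in> sets M" unfolding bad1_def by (intro sets.finite_UN) auto
  have mb1: "measure M bad1 \<le> 2 * real p * exp (- w\<^sup>2 / 2)"
  proof -
    have "measure M bad1 \<le> (\<Sum>i\<in>{1..p}. measure M {\<omega>\<in>space M. w < \<bar>X i \<omega>\<bar>})"
      unfolding bad1_def by (intro measure_UNION_le) auto
    also have "\<dots> \<le> (\<Sum>i\<in>{1..p}. 2 * exp (- w\<^sup>2 / 2))"
    proof (rule sum_mono)
      fix i assume i: "i \<in> {1..p}"
      show "measure M {\<omega>\<in>space M. w < \<bar>X i \<omega>\<bar>} \<le> 2 * exp (- w\<^sup>2 / 2)"
        using tail_bound[OF prob_space_axioms Xm[OF i] sing(1)[OF i] sing(2)[OF i] w0] i by simp
    qed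
    finally show ?thesis by simp
  qed
  define Z where "Z i \<omega> = trunc v L (X i \<omega>)" for i \<omega>
  define bad2 where "bad2 = {\<omega>\<in>space M. (\<Sum>i\<in>G. Z i \<omega>) \<le> real k * B}"
  have Zm: "Z i \<in> borel_measurable M" if "i \<in> G" for i
    using Gp(1) that unfolding Z_def by (intro measurable_compose[OF Xm trunc_meas]) auto
  have bad2m: "bad2 \<in> sets M" unfolding bad2_def using Zm Gp(2) by measurable
  have cE: "c * E0 = exp (L\<^sup>2 / 2 - v\<^sup>2 / 2) - 2 * exp (- (v\<^sup>2) / 2)"
    unfolding c_def cf_def E0_def E0f_def L_def[symmetric] v_def[symmetric]
    by (simp add: algebra_simps exp_add[symmetric])
  have mb2: "measure M bad2 \<le> (real q * B * E0 + (real q)\<^sup>2 * (E0\<^sup>2 * exp \<theta> - (c * E0)\<^sup>2)) / (real q * (c * E0) - real k * B)\<^sup>2"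
    unfolding bad2_def Gp(3)[symmetric]
  proof (rule second_moment[OF prob_space_axioms Gp(2) Zm])
    fix i \<omega> assume i: "i \<in> G" and "\<omega> \<in> space M"
    show "0 \<le> Z i \<omega> \<and> Z i \<omega> \<le> B"
      unfolding Z_def B_def Bf_def v_def[symmetric] L_def[symmetric]
      using trunc_nonneg trunc_le_B[OF v0 L0] by auto
  next
    fix i assume i: "i \<in> G"
    then have i': "i \<in> {1..p}" using Gp(1) by auto
    note te = trunc_expect[OF prob_space_axioms Xm[OF i'] sing(1)[OF i'] sing(2)[OF i'] v0 L0]
    show "c * E0 \<le> expect M (Z i)" unfolding Z_def cE using te(2) i' by simp
    show "expect M (Z i) \<le> E0" unfolding Z_def E0_def E0f_def L_def[symmetric] v_def[symmetric]
      using te(3) i' by simp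
  next
    fix i j assume i: "i \<in> G" and j: "j \<in> G" and ij: "i \<noteq> j"
    then have i': "i \<in> {1..p}" and j': "j \<in> {1..p}" using Gp(1) by auto
    note gp = gv_pair[OF gauss i' j' ij var1[OF i'] var1[OF j'], of a]
    have "expect M (\<lambda>\<omega>. Z i \<omega> * Z j \<omega>) \<le> exp (- 2 * (v + L) * v) * exp (a\<^sup>2 * (1 + \<bar>corr M (X i) (X j)\<bar>))"
      unfolding Z_def by (rule trunc_pair[OF prob_space_axioms Xm[OF i'] Xm[OF j']])
        (use gp v0 L0 in \<open>auto simp: a_def\<close>)
    also have "\<dots> = exp ((L\<^sup>2 - v\<^sup>2) + a\<^sup>2 * \<bar>corr M (X i) (X j)\<bar>)"
      unfolding exp_add[symmetric] a_def by (rule arg_cong[where f=exp]) (simp add: power2_eq_square algebra_simps)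
    also have "\<dots> \<le> exp ((L\<^sup>2 - v\<^sup>2) + \<theta>)"
    proof -
      have dist: "(if i \<le> j then j - i else i - j) \<in> {d..p}" by (rule Gp(4)[OF i j ij])
      have "\<bar>corr M (X i) (X j)\<bar> \<le> \<bar>\<rho> (if i \<le> j then j - i else i - j)\<bar>"
        using corr_bd[OF i' j' ij] by simp
      also have "\<dots> \<le> mx" unfolding mx_def using dist by (intro Max_ge) auto
      finally have "a\<^sup>2 * \<bar>corr M (X i) (X j)\<bar> \<le> \<theta>" unfolding \<theta>_def by (intro mult_left_mono) auto
      then show ?thesis by simp
    qed
    also have "\<dots> = E0\<^sup>2 * exp \<theta>"
      unfolding E0_def E0f_def L_def[symmetric] v_def[symmetric]
      by (simp add: exp_add[symmetric] power2_eq_square algebra_simps)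
    finally show "expect M (\<lambda>\<omega>. Z i \<omega> * Z j \<omega>) \<le> E0\<^sup>2 * exp \<theta>" .
  next
    show "0 \<le> c * E0" using c0 E00 unfolding c_def by simp
    have "c\<^sup>2 \<le> 1" using c0 c1 unfolding c_def by (simp add: power_le_one)
    also have "1 \<le> exp \<theta>" using th0 by simp
    finally have "c\<^sup>2 * E0\<^sup>2 \<le> exp \<theta> * E0\<^sup>2" by (intro mult_right_mono) auto
    then show "(c * E0)\<^sup>2 \<le> E0\<^sup>2 * exp \<theta>" by (simp add: power_mult_distrib mult.commute)
    have "real k * (B / (real q * E0)) < c" using R unfolding R_def Rf_def B_def q_def E0_def c_def .
    then show "real k * B < real (card G) * (c * E0)" using q0 E00
      unfolding Gp(3) by (simp add: field_simps)
  qed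
  have b2eq: "(real q * B * E0 + (real q)\<^sup>2 * (E0\<^sup>2 * exp \<theta> - (c * E0)\<^sup>2)) / (real q * (c * E0) - real k * B)\<^sup>2
     = (R + exp \<theta> - c\<^sup>2) / (c - real k * R)\<^sup>2"
  proof -
    define Q where "Q = real q * E0"
    have Q0: "0 < Q" unfolding Q_def using q0 E00 by simp
    have R': "R = B / Q" unfolding R_def Rf_def Q_def B_def q_def E0_def ..
    have n1: "real q * B * E0 = Q * B" unfolding Q_def by simp
    have n2: "(real q)\<^sup>2 * (E0\<^sup>2 * exp \<theta> - (c * E0)\<^sup>2) = Q\<^sup>2 * (exp \<theta> - c\<^sup>2)"
      unfolding Q_def by (simp add: power_mult_distrib algebra_simps)
    have n3: "Q * B = Q\<^sup>2 * R" unfolding R' using Q0 by (simp add: power2_eq_square)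
    have "(real q * B * E0 + (real q)\<^sup>2 * (E0\<^sup>2 * exp \<theta> - (c * E0)\<^sup>2)) = Q\<^sup>2 * (R + exp \<theta> - c\<^sup>2)"
      unfolding n1 n2 n3 by (simp add: algebra_simps)
    moreover have "(real q * (c * E0) - real k * B)\<^sup>2 = Q\<^sup>2 * (c - real k * R)\<^sup>2"
    proof -
      have "real q * (c * E0) - real k * B = Q * (c - real k * R)"
        unfolding R' using E00 q0 unfolding Q_def by (simp add: field_simps)
      then show ?thesis by (simp add: power_mult_distrib)
    qed
    ultimately show ?thesis using Q0 by simp
  qed
  define T where "T j \<omega> = ord_stat (\<lambda>i. \<bar>X i \<omega> + m i\<bar>) p j" for j \<omega>
  define E where "E = {\<omega> \<in> space M. real k * (T (p - k) \<omega>)\<^sup>2 > real l * (T (p - l) \<omega>)\<^sup>2}"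
  have Tm[measurable]: "T j \<in> borel_measurable M" if "1 \<le> j" "j \<le> p" for j
    unfolding T_def by (rule ord_stat_meas) (use that in auto)
  have Tk[measurable]: "T (p - k) \<in> borel_measurable M" using p by (intro Tm) auto
  have Tl[measurable]: "T (p - l) \<in> borel_measurable M" using p kl by (intro Tm) auto
  have Em: "E \<in> sets M" unfolding E_def by measurable
  have sub: "space M - (bad1 \<union> bad2) \<subseteq> E"
  proof
    fix \<omega> assume \<omega>: "\<omega> \<in> space M - (bad1 \<union> bad2)"
    then have om: "\<omega> \<in> space M" by simp
    have all: "\<bar>X i \<omega>\<bar> \<le> w" if "i \<in> {1..p}" for i
      using \<omega> that unfolding bad1_def by force
    have big: "real k * B < (\<Sum>i\<in>G. Z i \<omega>)" using \<omega> unfolding bad2_def by auto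
    define A where "A = (1 - e) * s"
    define Bb where "Bb = (1 + e) * s"
    have A0: "0 \<le> A" unfolding A_def using e s0 by simp
    have "(\<Sum>i\<in>G. Z i \<omega>) \<le> (\<Sum>i\<in>G. if v < X i \<omega> then B else 0)"
    proof (rule sum_mono)
      fix i assume "i \<in> G"
      show "Z i \<omega> \<le> (if v < X i \<omega> then B else 0)"
        using trunc_le_B[OF v0 L0, of "X i \<omega>"] trunc_pos[of v L "X i \<omega>"] trunc_nonneg[of v L "X i \<omega>"]
        unfolding Z_def B_def Bf_def v_def[symmetric] L_def[symmetric]
        by (cases "v < X i \<omega>") (auto simp: trunc_def)
    qed
    also have "\<dots> = B * real (card {i\<in>G. v < X i \<omega>})"
      using Gp(2) by (simp add: sum.If_cases Int_def conj_commute)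
    finally have "real k * B < B * real (card {i\<in>G. v < X i \<omega>})" using big by simp
    then have ck: "k < card {i\<in>G. v < X i \<omega>}" using B0 by (simp add: mult.commute)
    have "{i\<in>G. v < X i \<omega>} \<subseteq> {i\<in>{1..p}. A < \<bar>X i \<omega> + m i\<bar>}"
    proof
      fix i assume i: "i \<in> {i\<in>G. v < X i \<omega>}"
      then have i': "i \<in> {1..p}" using Gp(1) by auto
      have "A < X i \<omega> + m i" using i mb[OF i'] unfolding A_def v_def vf_def s_def[symmetric]
        by (auto simp: algebra_simps)
      then show "i \<in> {i\<in>{1..p}. A < \<bar>X i \<omega> + m i\<bar>}" using i' by auto
    qed
    then have "card {i\<in>G. v < X i \<omega>} \<le> card {i\<in>{1..p}. A < \<bar>X i \<omega> + m i\<bar>}"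
      by (intro card_mono) auto
    then have "k + 1 \<le> card {i\<in>{1..p}. A < \<bar>X i \<omega> + m i\<bar>}" using ck by simp
    then have TkA: "A < T (p - k) \<omega>" unfolding T_def by (intro ord_stat_gt p)
    have TlB: "T (p - l) \<omega> \<le> Bb" unfolding T_def
    proof (rule ord_stat_le)
      show "l < p" using p kl by simp
      fix i assume i: "i \<in> {1..p}"
      have "\<bar>X i \<omega> + m i\<bar> \<le> \<bar>X i \<omega>\<bar> + \<bar>m i\<bar>" by (rule abs_triangle_ineq)
      also have "\<dots> \<le> w + (e/2) * s" using all[OF i] mb[OF i] unfolding s_def by simp
      also have "\<dots> = Bb" unfolding Bb_def w_def wfn_def s_def by (simp add: algebra_simps)
      finally show "\<bar>X i \<omega> + m i\<bar> \<le> Bb" .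
    qed
    have Tl0: "0 \<le> T (p - l) \<omega>" unfolding T_def by (rule ord_stat_nonneg) (use p kl in auto)
    have "real l * (T (p - l) \<omega>)\<^sup>2 \<le> real l * Bb\<^sup>2"
      using TlB Tl0 by (intro mult_left_mono power_mono) auto
    also have "\<dots> = real l * (1 + e)\<^sup>2 * s\<^sup>2" unfolding Bb_def by (simp add: power_mult_distrib)
    also have "\<dots> \<le> real k * (1 - e)\<^sup>2 * s\<^sup>2" using ekl by (intro mult_right_mono) auto
    also have "\<dots> = real k * A\<^sup>2" unfolding A_def by (simp add: power_mult_distrib)
    also have "\<dots> < real k * (T (p - k) \<omega>)\<^sup>2"
    proof -
      have "A\<^sup>2 < (T (p - k) \<omega>)\<^sup>2" using TkA A0 by (intro power_strict_mono) auto
      moreover have "0 < real k" using kl by simp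
      ultimately show ?thesis by simp
    qed
    finally show "\<omega> \<in> E" unfolding E_def using om by simp
  qed
  have "1 - measure M bad1 - measure M bad2 \<le> 1 - measure M (bad1 \<union> bad2)"
    using measure_Un_le[OF bad1m bad2m] by simp
  also have "\<dots> = measure M (space M - (bad1 \<union> bad2))"
    using prob_compl[OF sets.Un[OF bad1m bad2m]] by simp
  also have "\<dots> \<le> measure M E" using sub Em by (intro finite_measure_mono) auto
  finally have fin: "1 - measure M bad1 - measure M bad2 \<le> measure M E" .
  have "1 - 2 * real p * exp (- w\<^sup>2 / 2) - (R + exp \<theta> - c\<^sup>2) / (c - real k * R)\<^sup>2 \<le> measure M E"
    using fin mb1 mb2 b2eq by linarith
  then show ?thesis
    unfolding E_def T_def w_def R_def \<theta>_def a_def v_def L_def mx_def d_def c_def .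
qed

lemma th_lim:
  fixes \<rho> :: "nat \<Rightarrow> real"
  assumes rho_log: "((\<lambda>p. \<rho> p * ln (real p)) \<longlongrightarrow> 0) at_top" and e: "0 < e" "e < 1"
  shows "((\<lambda>p. (vf e p + Lf p)\<^sup>2 * Max (insert 0 ((\<lambda>n. \<bar>\<rho> n\<bar>) ` {df e p..p}))) \<longlongrightarrow> 0) at_top"
  unfolding tendsto_iff
proof (intro allI impI)
  fix \<epsilon> :: real assume \<epsilon>: "0 < \<epsilon>"
  define \<eta> where "\<eta> = \<epsilon> * e / 32"
  have \<eta>: "0 < \<eta>" unfolding \<eta>_def using \<epsilon> e by simp
  have "eventually (\<lambda>n. dist (\<rho> n * ln (real n)) 0 < \<eta>) at_top"
    using rho_log \<eta> unfolding tendsto_iff by blast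
  then obtain N0 where N0: "\<And>n. n \<ge> N0 \<Longrightarrow> \<bar>\<rho> n * ln (real n)\<bar> < \<eta>"
    unfolding eventually_at_top_linorder by auto
  have ev1: "eventually (\<lambda>p. real (max N0 3) \<le> real p powr (e/2)) at_top"
    using powr_nat_at_top[of "e/2"] e by (simp add: filterlim_at_top)
  show "eventually (\<lambda>p. dist ((vf e p + Lf p)\<^sup>2 * Max (insert 0 ((\<lambda>n. \<bar>\<rho> n\<bar>) ` {df e p..p}))) 0 < \<epsilon>) at_top"
    using ev1 eventually_ge_at_top[of 3]
  proof eventually_elim
    case (elim p)
    define u where "u = ln (real p)"
    define mx where "mx = Max (insert 0 ((\<lambda>n. \<bar>\<rho> n\<bar>) ` {df e p..p}))"
    have p1: "1 \<le> p" using elim by simp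
    have p0: "0 < real p" using elim by simp
    have "(3::real) \<le> real p" using elim by simp
    then have "exp 1 \<le> real p" using exp_le by linarith
    then have "ln (exp 1) \<le> ln (real p)" using p0 by (subst ln_le_cancel_iff) auto
    then have u1: "1 \<le> u" unfolding u_def by simp
    note db = df_bounds[OF p1 e(1)]
    have mxb: "mx \<le> 2 * \<eta> / (e * u)"
      unfolding mx_def
    proof (subst Max_le_iff, simp, simp, intro ballI)
      fix x assume "x \<in> insert 0 ((\<lambda>n. \<bar>\<rho> n\<bar>) ` {df e p..p})"
      then consider "x = 0" | n where "n \<in> {df e p..p}" "x = \<bar>\<rho> n\<bar>" by auto
      then show "x \<le> 2 * \<eta> / (e * u)"
      proof cases
        case 1 then show ?thesis using \<eta> e u1 by simp
      next
        case 2
        have "df e p \<le> n" using 2(1) by simp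
        then have "real (df e p) \<le> real n" by simp
        then have nd: "real p powr (e/2) \<le> real n" using db(1) by linarith
        have nN: "N0 \<le> n" using elim(1) nd by (smt (verit) of_nat_le_iff of_nat_max max.bounded_iff)
        have pp: "0 < real p powr (e/2)" using p0 by simp
        have "ln (real p powr (e/2)) \<le> ln (real n)"
        proof -
          have npos: "0 < real n" using nd pp by linarith
          show ?thesis using iffD2[OF ln_le_cancel_iff[OF pp npos] nd] .
        qed
        then have lnn: "e / 2 * u \<le> ln (real n)" unfolding u_def using p0 by (simp add: ln_powr)
        have lp: "0 < e / 2 * u" using e u1 by simp
        have "\<bar>\<rho> n\<bar> * ln (real n) < \<eta>" using N0[OF nN] lnn lp by (simp add: abs_mult)
        then have "\<bar>\<rho> n\<bar> * (e / 2 * u) \<le> \<eta>"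
          using lnn by (smt (verit) abs_ge_zero mult_left_mono)
        then have "\<bar>\<rho> n\<bar> \<le> \<eta> / (e / 2 * u)" using lp by (simp add: field_simps)
        also have "\<dots> = 2 * \<eta> / (e * u)" by simp
        finally show ?thesis using 2 by simp
      qed
    qed
    have mx0: "0 \<le> mx" unfolding mx_def by (intro Max_ge) auto
    have s2: "(sq_ln p)\<^sup>2 = 2 * u" unfolding u_def by (rule sq_ln_sq[OF p1])
    have s0: "0 \<le> sq_ln p" by (rule sq_ln_nonneg[OF p1])
    have vs: "vf e p \<le> sq_ln p" unfolding vf_def using s0 e mult_right_mono[of "1 - e/2" 1 "sq_ln p"] by simp
    have v0: "0 \<le> vf e p" unfolding vf_def using s0 e by simp
    have Ls: "Lf p \<le> sq_ln p"
    proof -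
      have "Lf p = u powr (1/4)" unfolding Lf_def u_def ..
      also have "\<dots> \<le> u powr (1/2)" using u1 by (intro powr_mono) auto
      also have "\<dots> = sqrt u" using u1 by (simp add: powr_half_sqrt)
      also have "\<dots> \<le> sqrt (2 * u)" using u1 by simp
      also have "\<dots> = sq_ln p" unfolding sq_ln_def u_def ..
      finally show ?thesis .
    qed
    have a2: "(vf e p + Lf p)\<^sup>2 \<le> 8 * u"
    proof -
      have "(vf e p + Lf p)\<^sup>2 \<le> (2 * sq_ln p)\<^sup>2"
        using vs Ls v0 Lf_nonneg[of p] by (intro power_mono) auto
      also have "\<dots> = 8 * u" using s2 by (simp add: power_mult_distrib)
      finally show ?thesis .
    qed
    have "(vf e p + Lf p)\<^sup>2 * mx \<le> 8 * u * (2 * \<eta> / (e * u))"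
      using a2 mxb mx0 u1 by (intro mult_mono) auto
    also have "\<dots> = 16 * \<eta> / e" using u1 e by (simp add: field_simps)
    also have "\<dots> = \<epsilon> / 2" unfolding \<eta>_def using e by simp
    finally have "(vf e p + Lf p)\<^sup>2 * mx < \<epsilon>" using \<epsilon> by simp
    moreover have "0 \<le> (vf e p + Lf p)\<^sup>2 * mx" using mx0 by simp
    ultimately show ?case unfolding mx_def by simp
  qed
qed

lemma ekl_aux:
  fixes x :: real assumes x: "2 \<le> x"
  shows "x * (1 + 1 / (8 * x))\<^sup>2 \<le> (x + 1) * (1 - 1 / (8 * x))\<^sup>2"
proof -
  have e1: "x * (1 + 1 / (8 * x))\<^sup>2 = x + 1/4 + 1 / (64 * x)"
    using x by (simp add: power2_eq_square field_simps)
  have e2: "(x + 1) * (1 - 1 / (8 * x))\<^sup>2 = x + 3/4 - 1 / (4 * x) + 1 / (64 * x) + 1 / (64 * x * x)"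
    using x by (simp add: power2_eq_square field_simps)
  have "1 / (4 * x) \<le> 1 / 8" using x by (simp add: field_simps)
  moreover have "0 \<le> 1 / (64 * x * x)" using x by simp
  ultimately show ?thesis unfolding e1 e2 by linarith
qed
theorem lemma1:
  fixes M :: "nat \<Rightarrow> 'a measure"
    and \<eta> :: "nat \<Rightarrow> nat \<Rightarrow> 'a \<Rightarrow> real"
    and m :: "nat \<Rightarrow> nat \<Rightarrow> real"
    and \<rho> :: "nat \<Rightarrow> real"
    and k l :: nat
  assumes gauss: "\<And>p. centered_gaussian_vector (M p) {1..p} (\<eta> p)"
    and var1: "\<And>p i. i \<in> {1..p} \<Longrightarrow> var (M p) (\<eta> p i) = 1"
    and corr_bd: "\<And>p i j. i \<in> {1..p} \<Longrightarrow> j \<in> {1..p} \<Longrightarrow> i \<noteq> j \<Longrightarrow>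
        \<bar>corr (M p) (\<eta> p i) (\<eta> p j)\<bar> < \<rho> (if i \<le> j then j - i else i - j)"
    and rho_lt1: "\<And>n. n \<ge> 1 \<Longrightarrow> \<rho> n < 1"
    and rho_log: "((\<lambda>p. \<rho> p * ln (real p)) \<longlongrightarrow> 0) at_top"
    and mean_small: "(\<lambda>p. Max ((\<lambda>i. \<bar>m p i\<bar>) ` {1..p})) \<in> o(\<lambda>p. sqrt (ln (real p)))"
    and kl: "2 \<le> l" "l < k"
  shows "((\<lambda>p. measure (M p)
            {\<omega> \<in> space (M p).
               real k * (ord_stat (\<lambda>i. \<bar>\<eta> p i \<omega> + m p i\<bar>) p (p - k))\<^sup>2
             > real l * (ord_stat (\<lambda>i. \<bar>\<eta> p i \<omega> + m p i\<bar>) p (p - l))\<^sup>2})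
          \<longlongrightarrow> 1) at_top"
proof -
  define e where "e = 1 / (8 * real l)"
  have l2: "2 \<le> real l" using kl by simp
  have e: "0 < e" "e < 1" unfolding e_def using l2 by (auto simp: field_simps)
  have ekl: "real l * (1 + e)\<^sup>2 \<le> real k * (1 - e)\<^sup>2"
  proof -
    have "real l * (1 + e)\<^sup>2 \<le> (real l + 1) * (1 - e)\<^sup>2" unfolding e_def by (rule ekl_aux[OF l2])
    also have "\<dots> \<le> real k * (1 - e)\<^sup>2" using kl by (intro mult_right_mono) auto
    finally show ?thesis .
  qed
  define Th where "Th p = (vf e p + Lf p)\<^sup>2 * Max (insert 0 ((\<lambda>n. \<bar>\<rho> n\<bar>) ` {df e p..p}))" for p
  define lo where "lo p = 1 - 2 * real p * exp (- (wfn e p)\<^sup>2 / 2)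
     - (Rf e p + exp (Th p) - (cf p)\<^sup>2) / (cf p - real k * Rf e p)\<^sup>2" for p
  define Pr where "Pr p = measure (M p)
            {\<omega> \<in> space (M p).
               real k * (ord_stat (\<lambda>i. \<bar>\<eta> p i \<omega> + m p i\<bar>) p (p - k))\<^sup>2
             > real l * (ord_stat (\<lambda>i. \<bar>\<eta> p i \<omega> + m p i\<bar>) p (p - l))\<^sup>2}" for p
  have Th_lim: "(Th \<longlongrightarrow> 0) at_top" unfolding Th_def by (rule th_lim[OF rho_log e])
  have cR: "((\<lambda>p. cf p - real k * Rf e p) \<longlongrightarrow> 1 - real k * 0) at_top"
    by (intro tendsto_intros cf_lim R_lim e)
  have num: "((\<lambda>p. Rf e p + exp (Th p) - (cf p)\<^sup>2) \<longlongrightarrow> 0 + exp 0 - 1\<^sup>2) at_top"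
    by (intro tendsto_intros R_lim e Th_lim cf_lim)
  have den: "((\<lambda>p. (cf p - real k * Rf e p)\<^sup>2) \<longlongrightarrow> (1 - real k * 0)\<^sup>2) at_top"
    by (intro tendsto_intros cR)
  have b2: "((\<lambda>p. (Rf e p + exp (Th p) - (cf p)\<^sup>2) / (cf p - real k * Rf e p)\<^sup>2) \<longlongrightarrow> 0 / 1) at_top"
    using tendsto_divide[OF num den] by simp
  have b1: "((\<lambda>p. 2 * real p * exp (- (wfn e p)\<^sup>2 / 2)) \<longlongrightarrow> 0) at_top" by (rule b1_lim[OF e(1)])
  have "(lo \<longlongrightarrow> 1 - 0 - 0 / 1) at_top"
    unfolding lo_def by (intro tendsto_diff tendsto_const b1 b2)
  then have lo_lim': "(lo \<longlongrightarrow> 1) at_top" by simp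
  have evR: "eventually (\<lambda>p. real k * Rf e p < cf p) at_top"
  proof -
    have cR': "((\<lambda>p. cf p - real k * Rf e p) \<longlongrightarrow> 1) at_top" using cR by simp
    have "eventually (\<lambda>p. 0 < cf p - real k * Rf e p) at_top"
      using order_tendstoD(1)[OF cR', of 0] by simp
    then show ?thesis by eventually_elim simp
  qed
  have evc: "eventually (\<lambda>p. 0 \<le> cf p) at_top"
  proof -
    have "eventually (\<lambda>p. 0 < cf p) at_top" using order_tendstoD(1)[OF cf_lim, of 0] by simp
    then show ?thesis by eventually_elim simp
  qed
  have evq: "eventually (\<lambda>p. 1 \<le> qf e p) at_top"
  proof -
    have "eventually (\<lambda>p. 4 \<le> real p powr (1 - e/2)) at_top"
      using powr_nat_at_top[of "1 - e/2"] e by (simp add: filterlim_at_top)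
    moreover have "eventually (\<lambda>p. real p powr (1 - e/2) / 4 \<le> real (qf e p)) at_top"
      using q_lower[of e] e by simp
    ultimately show ?thesis
    proof eventually_elim
      case (elim p) then have "1 \<le> real (qf e p)" by simp
      then show ?case by simp
    qed
  qed
  have evm: "eventually (\<lambda>p. \<forall>i\<in>{1..p}. \<bar>m p i\<bar> \<le> (e/2) * sq_ln p) at_top"
  proof -
    have c: "0 < e / 2 * sqrt 2" using e by simp
    have "eventually (\<lambda>p. norm (Max ((\<lambda>i. \<bar>m p i\<bar>) ` {1..p})) \<le> (e / 2 * sqrt 2) * norm (sqrt (ln (real p)))) at_top"
      by (rule landau_o.smallD[OF mean_small c])
    then show ?thesis using eventually_ge_at_top[of 1]
    proof eventually_elim
      case (elim p)
      have u: "0 \<le> ln (real p)" using elim(2) by simp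
      show ?case
      proof
        fix i assume i: "i \<in> {1..p}"
        have "\<bar>m p i\<bar> \<le> Max ((\<lambda>i. \<bar>m p i\<bar>) ` {1..p})" using i by (intro Max_ge) auto
        also have "\<dots> \<le> norm (Max ((\<lambda>i. \<bar>m p i\<bar>) ` {1..p}))" by simp
        also have "\<dots> \<le> (e / 2 * sqrt 2) * norm (sqrt (ln (real p)))" by (rule elim(1))
        also have "\<dots> = (e/2) * sq_ln p" using u unfolding sq_ln_def by (simp add: real_sqrt_mult)
        finally show "\<bar>m p i\<bar> \<le> (e/2) * sq_ln p" .
      qed
    qed
  qed
  have evlo: "eventually (\<lambda>p. lo p \<le> Pr p) at_top"
    using evR evc evq evm eventually_ge_at_top[of "max 3 (k + 1)"]
  proof eventually_elim
    case (elim p)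
    show ?case unfolding lo_def Pr_def Th_def
    proof (rule main_bound[OF gauss var1 corr_bd e kl(2) ekl])
      show "3 \<le> p" "k < p" using elim(5) by auto
    qed (use elim in auto)
  qed
  have evhi: "eventually (\<lambda>p. Pr p \<le> 1) at_top"
  proof (rule always_eventually, intro allI)
    fix p
    interpret prob_space "M p" by (rule gv_prob[OF gauss])
    show "Pr p \<le> 1" unfolding Pr_def by simp
  qed
  have "(Pr \<longlongrightarrow> 1) at_top"
    by (rule tendsto_sandwich[OF evlo evhi lo_lim' tendsto_const])
  then show ?thesis unfolding Pr_def .
qed


end
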